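(* Let $n \geq 4$ and let $P$ be a regular convex $n$-gon. There is a bijection between the set of symmetry classes of $2$-eared triangulations of $P$ (orbits under the natural action of the dihedral group of order $2n$ by rotations and reflections) and the set of equivalence classes of compositions of $n-3$, where two compositions are considered equivalent if one can be obtained from the other by a sequence of conjugations and reversals.
   Context: A triangulation of a convex polygon $P$ uses non-crossing diagonals to divide $P$ into triangles. An ear of a triangulation $T$ is a triangle of $T$ that shares two sides with $P$; $T$ is $2$-eared if it has exactly two ears. A composition of a positive integer $m$ is an ordered sequence $(x_1,\dots,x_k)$ of positive integers with sum $m$. Compositions of $m$ correspond bijectively to subsets of the $m-1$ gaps between $m$ balls in a row (place a bar in the chosen gaps; the parts are the block sizes). The conjugate of a composition is the composition corresponding to the complementary set of gaps. The reversal of $(x_1,\dots,x_k)$ is $(x_k,\dots,x_1)$. *)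

theory Defs
  imports Main
begin

section \<open>Triangulations of a convex n-gon (vertices 0,...,n-1 in cyclic order)\<close>

definition poly_sides :: "nat \<Rightarrow> nat set set" where
  "poly_sides n = {{i, (i + 1) mod n} | i. i < n}"

definition diagonals :: "nat \<Rightarrow> nat set set" where
  "diagonals n = {{i, j} | i j. i < j \<and> j < n \<and> {i, j} \<notin> poly_sides n}"

definition crosses :: "nat set \<Rightarrow> nat set \<Rightarrow> bool" where
  "crosses d e \<longleftrightarrow> (\<exists>a b c f. (d = {a, b} \<and> e = {c, f} \<or> d = {c, f} \<and> e = {a, b})
                               \<and> a < c \<and> c < b \<and> b < f)"

definition triangulation :: "nat \<Rightarrow> nat set set \<Rightarrow> bool" where
  "triangulation n T \<longleftrightarrow> T \<subseteq> diagonals n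
     \<and> (\<forall>d\<in>T. \<forall>e\<in>T. \<not> crosses d e)
     \<and> (\<forall>d\<in>diagonals n - T. \<exists>e\<in>T. crosses d e)"

definition triangles :: "nat \<Rightarrow> nat set set \<Rightarrow> nat set set" where
  "triangles n T = {{a, b, c} | a b c. a < b \<and> b < c \<and> c < n
     \<and> {a, b} \<in> T \<union> poly_sides n \<and> {b, c} \<in> T \<union> poly_sides n \<and> {a, c} \<in> T \<union> poly_sides n}"

definition is_ear :: "nat \<Rightarrow> nat set set \<Rightarrow> nat set \<Rightarrow> bool" where
  "is_ear n T t \<longleftrightarrow> t \<in> triangles n T \<and> card {s \<in> poly_sides n. s \<subseteq> t} \<ge> 2"

definition two_eared_triangulations :: "nat \<Rightarrow> nat set set set" where
  "two_eared_triangulations n =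
     {T. triangulation n T \<and> card {t. is_ear n T t} = 2}"

definition dihedral :: "nat \<Rightarrow> (nat \<Rightarrow> nat) set" where
  "dihedral n = {(\<lambda>i. (i + k) mod n) | k. k < n} \<union> {(\<lambda>i. (k + (n - i)) mod n) | k. k < n}"

definition act :: "(nat \<Rightarrow> nat) \<Rightarrow> nat set set \<Rightarrow> nat set set" where
  "act g T = (\<lambda>d. g ` d) ` T"

definition symmetry_rel :: "nat \<Rightarrow> (nat set set \<times> nat set set) set" where
  "symmetry_rel n = {(T, act g T) | T g. T \<in> two_eared_triangulations n \<and> g \<in> dihedral n}"

definition symmetry_classes :: "nat \<Rightarrow> nat set set set set" where
  "symmetry_classes n = two_eared_triangulations n // symmetry_rel n"

definition compositions :: "nat \<Rightarrow> nat list set" where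
  "compositions m = {xs. (\<forall>x\<in>set xs. 0 < x) \<and> sum_list xs = m}"

text \<open>Gaps between m balls are numbered 1..m-1 (gap i lies after ball i).\<close>
definition comp_gaps :: "nat list \<Rightarrow> nat set" where
  "comp_gaps xs = {sum_list (take i xs) | i. 0 < i \<and> i < length xs}"

definition gaps_comp :: "nat \<Rightarrow> nat set \<Rightarrow> nat list" where
  "gaps_comp m S = (let ps = 0 # sorted_list_of_set S @ [m]
                    in map (\<lambda>i. ps ! (i + 1) - ps ! i) [0..<length ps - 1])"

definition conjugate :: "nat \<Rightarrow> nat list \<Rightarrow> nat list" where
  "conjugate m xs = gaps_comp m ({1..<m} - comp_gaps xs)"

definition comp_step :: "nat \<Rightarrow> (nat list \<times> nat list) set" where
  "comp_step m = {(xs, conjugate m xs) | xs. xs \<in> compositions m}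
               \<union> {(xs, rev xs) | xs. xs \<in> compositions m}"

definition comp_equiv :: "nat \<Rightarrow> (nat list \<times> nat list) set" where
  "comp_equiv m = (comp_step m \<union> (comp_step m)\<inverse>)\<^sup>*"

definition comp_classes :: "nat \<Rightarrow> nat list set set" where
  "comp_classes m = compositions m // comp_equiv m"

end

theory Submission
  imports Defs
begin

lemma mod_lt2: "x < 2*n \<Longrightarrow> (x::nat) mod n = (if x < n then x else x - n)"
proof (cases "x < n")
  case False
  assume "x < 2*n"
  then have "x - n < n" using False by simp
  moreover have "x mod n = (x - n) mod n" using False by (simp add: le_mod_geq)
  ultimately show ?thesis using False by simp
qed simp

definition cyc :: "nat \<Rightarrow> nat \<Rightarrow> nat \<Rightarrow> nat \<Rightarrow> bool" where
  "cyc a c b f \<longleftrightarrow> (a<c \<and> c<b \<and> b<f) \<or> (c<b \<and> b<f \<and> f<a) \<or> (b<f \<and> f<a \<and> a<c) \<or> (f<a \<and> a<c \<and> c<b)"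

lemma suc_if: "x < n \<Longrightarrow> (x+1) mod (n::nat) = (if x + 1 = n then 0 else x + 1)"
  by auto

lemma cyc_rot1:
  assumes "a<n" "b<n" "c<n" "f<n" "cyc a c b f"
  shows "cyc ((a+1) mod n) ((c+1) mod n) ((b+1) mod n) ((f+1) mod n)"
proof -
  have "a + 1 \<le> n" "b+1 \<le> n" "c+1\<le>n" "f+1\<le>n" using assms by auto
  then show ?thesis using assms(5) unfolding cyc_def suc_if[OF assms(1)] suc_if[OF assms(2)] suc_if[OF assms(3)] suc_if[OF assms(4)]
    by (auto split: if_split)
qed

lemma cyc_rot:
  assumes "a<n" "b<n" "c<n" "f<n" "cyc a c b f"
  shows "cyc ((a+k) mod n) ((c+k) mod n) ((b+k) mod n) ((f+k) mod n)"
proof (induction k)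
  case 0 then show ?case using assms by simp
next
  case (Suc k)
  have p: "0 < n" using assms by simp
  have e: "\<And>x. (x + Suc k) mod n = ((x+k) mod n + 1) mod n" by (simp add: mod_Suc_eq)
  show ?case unfolding e by (rule cyc_rot1) (use Suc p in auto)
qed

lemma crosses_cyc: "crosses d e \<longleftrightarrow> (\<exists>a b c f. d={a,b} \<and> e={c,f} \<and> cyc a c b f)"
proof
  assume "crosses d e"
  then obtain a b c f where h: "(d = {a, b} \<and> e = {c, f} \<or> d = {c, f} \<and> e = {a, b}) \<and> a < c \<and> c < b \<and> b < f"
    unfolding crosses_def by blast
  show "\<exists>a b c f. d={a,b} \<and> e={c,f} \<and> cyc a c b f"
  proof (cases "d = {a,b} \<and> e = {c,f}")
    case True then show ?thesis using h unfolding cyc_def by blast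
  next
    case False
    then have "d = {c,f}" "e = {b,a}" using h by auto
    moreover have "cyc c b f a" using h unfolding cyc_def by auto
    ultimately show ?thesis by blast
  qed
next
  assume "\<exists>a b c f. d={a,b} \<and> e={c,f} \<and> cyc a c b f"
  then obtain a b c f where h: "d={a,b}" "e={c,f}" "cyc a c b f" by blast
  from h(3) consider "a<c \<and> c<b \<and> b<f" | "c<b \<and> b<f \<and> f<a" | "b<f \<and> f<a \<and> a<c" | "f<a \<and> a<c \<and> c<b"
    unfolding cyc_def by blast
  then show "crosses d e"
  proof cases
    case 1 then show ?thesis using h unfolding crosses_def by blast
  next
    case 2
    have "d = {b,a}" using h by auto
    then show ?thesis using h 2 unfolding crosses_def by blast
  next
    case 3
    have "d = {b,a}" "e = {f,c}" using h by auto
    then show ?thesis using h 3 unfolding crosses_def by blast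
  next
    case 4
    have "e = {f,c}" using h by auto
    then show ?thesis using h 4 unfolding crosses_def by blast
  qed
qed

definition rot :: "nat \<Rightarrow> nat \<Rightarrow> nat \<Rightarrow> nat" where "rot n k i = (i + k) mod n"
definition sucn :: "nat \<Rightarrow> nat \<Rightarrow> nat" where "sucn n i = (i + 1) mod n"
definition predn :: "nat \<Rightarrow> nat \<Rightarrow> nat" where "predn n i = (i + (n - 1)) mod n"

lemma rot_lt: "0 < n \<Longrightarrow> rot n k i < n" unfolding rot_def by simp

lemma rot_inv: assumes "k < n" "i < n" shows "rot n ((n-k) mod n) (rot n k i) = i"
proof -
  have "rot n ((n-k) mod n) (rot n k i) = (i + k + (n - k)) mod n"
    unfolding rot_def by (simp add: mod_add_left_eq mod_add_right_eq)
  also have "\<dots> = (i + n) mod n" using assms by simp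
  finally show ?thesis using assms by simp
qed

lemma rot_inv2: assumes "k < (n::nat)" shows "(n - (n-k) mod n) mod n = k"
proof (cases "k = 0")
  case True then show ?thesis by simp
next
  case False then have "(n-k) mod n = n - k" using assms by simp
  then show ?thesis using assms False by simp
qed

lemma rot_sucn: "0 < n \<Longrightarrow> rot n k (sucn n i) = sucn n (rot n k i)"
  unfolding rot_def sucn_def by (simp only: mod_add_left_eq) (simp add: ac_simps)

lemma rot_predn: "0 < n \<Longrightarrow> rot n k (predn n i) = predn n (rot n k i)"
  unfolding rot_def predn_def by (simp only: mod_add_left_eq) (simp add: ac_simps)

lemma sides_alt: "poly_sides n = {{i, sucn n i} | i. i < n}"
  unfolding poly_sides_def sucn_def by simp

lemma rot_side: assumes "0 < n" "s \<in> poly_sides n" shows "rot n k ` s \<in> poly_sides n"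
proof -
  obtain i where "s = {i, sucn n i}" "i < n" using assms(2) unfolding sides_alt by blast
  then have "rot n k ` s = {rot n k i, sucn n (rot n k i)}" using rot_sucn[OF assms(1)] by simp
  then show ?thesis unfolding sides_alt using rot_lt[OF assms(1)] by blast
qed

lemma rot_crosses:
  assumes "0 < n" "d \<subseteq> {..<n}" "e \<subseteq> {..<n}" "crosses d e"
  shows "crosses (rot n k ` d) (rot n k ` e)"
proof -
  obtain a b c f where h: "d={a,b}" "e={c,f}" "cyc a c b f" using assms(4) unfolding crosses_cyc by blast
  have lt: "a<n" "b<n" "c<n" "f<n" using h assms(2,3) by auto
  have "cyc (rot n k a) (rot n k c) (rot n k b) (rot n k f)"
    unfolding rot_def by (rule cyc_rot) (use lt h in auto)
  then show ?thesis unfolding crosses_cyc using h by auto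
qed

lemma diag_sub: "d \<in> diagonals n \<Longrightarrow> d \<subseteq> {..<n}"
  unfolding diagonals_def by auto

lemma diag_alt: "d \<in> diagonals n \<longleftrightarrow> (\<exists>i j. d = {i,j} \<and> i<n \<and> j<n \<and> i\<noteq>j) \<and> d \<notin> poly_sides n"
proof
  assume "d \<in> diagonals n"
  then obtain i j where "d = {i,j}" "i<j" "j<n" "d \<notin> poly_sides n" unfolding diagonals_def by blast
  then show "(\<exists>i j. d = {i,j} \<and> i<n \<and> j<n \<and> i\<noteq>j) \<and> d \<notin> poly_sides n"
    by (metis less_trans order_less_irrefl)
next
  assume h: "(\<exists>i j. d = {i,j} \<and> i<n \<and> j<n \<and> i\<noteq>j) \<and> d \<notin> poly_sides n"
  then obtain i j where ij: "d = {i,j}" "i<n" "j<n" "i\<noteq>j" by blast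
  show "d \<in> diagonals n"
  proof (cases "i < j")
    case True then show ?thesis using ij h unfolding diagonals_def by blast
  next
    case False then have "j < i" "d = {j,i}" using ij by auto
    then show ?thesis using ij h unfolding diagonals_def by blast
  qed
qed

lemma rot_back: assumes "0<n" "k<n" "X \<subseteq> {..<n}"
  shows "rot n ((n-k) mod n) ` rot n k ` X = X" "rot n k ` rot n ((n-k) mod n) ` X = X"
proof -
  show "rot n ((n-k) mod n) ` rot n k ` X = X"
    using rot_inv[OF assms(2)] assms(3) by (force simp: image_image)
  have "(n-k) mod n < n" using assms by simp
  from rot_inv[OF this] have "\<And>i. i<n \<Longrightarrow> rot n k (rot n ((n-k) mod n) i) = i"
    using rot_inv2[OF assms(2)] by simp
  then show "rot n k ` rot n ((n-k) mod n) ` X = X" using assms(3) by (force simp: image_image)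
qed

lemma rot_img_sub: "0 < n \<Longrightarrow> rot n k ` X \<subseteq> {..<n}" using rot_lt by auto

lemma rot_diag: assumes "0<n" "k<n" "d \<in> diagonals n" shows "rot n k ` d \<in> diagonals n"
proof -
  obtain i j where ij: "d = {i,j}" "i<n" "j<n" "i\<noteq>j" using assms(3) unfolding diag_alt by blast
  have ne: "rot n k i \<noteq> rot n k j" using rot_inv[OF assms(2)] ij by metis
  have ns: "rot n k ` d \<notin> poly_sides n"
  proof
    assume "rot n k ` d \<in> poly_sides n"
    then have "rot n ((n-k) mod n) ` rot n k ` d \<in> poly_sides n" using rot_side assms by blast
    then show False using rot_back(1)[OF assms(1,2) diag_sub[OF assms(3)]] assms(3) unfolding diag_alt by simp
  qed
  show ?thesis unfolding diag_alt using ij ne ns rot_lt[OF assms(1)] by auto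
qed

lemma act_act: "act g (act h T) = act (g \<circ> h) T"
  unfolding act_def by (auto simp: image_image image_comp)

lemma act_cong: assumes "\<And>d. d \<in> T \<Longrightarrow> d \<subseteq> {..<n}" "\<And>i. i<n \<Longrightarrow> g i = h i"
  shows "act g T = act h T"
proof -
  have "\<And>d. d \<in> T \<Longrightarrow> g ` d = h ` d" using assms by (metis image_cong lessThan_iff subsetD)
  then show ?thesis unfolding act_def by auto
qed

lemma tri_sub: "triangulation n T \<Longrightarrow> T \<subseteq> diagonals n" unfolding triangulation_def by blast

lemma rot_act_back: assumes "0<n" "k<n" "T \<subseteq> diagonals n"
  shows "act (rot n ((n-k) mod n)) (act (rot n k) T) = T" "act (rot n k) (act (rot n ((n-k) mod n)) T) = T"
proof -
  have s: "\<And>d. d \<in> T \<Longrightarrow> d \<subseteq> {..<n}" using assms(3) diag_sub by blast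
  show "act (rot n ((n-k) mod n)) (act (rot n k) T) = T"
    unfolding act_def using rot_back(1)[OF assms(1,2) s] by (force simp: image_image)
  show "act (rot n k) (act (rot n ((n-k) mod n)) T) = T"
    unfolding act_def using rot_back(2)[OF assms(1,2) s] by (force simp: image_image)
qed

lemma rot_tri: assumes "0<n" "k<n" "triangulation n T" shows "triangulation n (act (rot n k) T)"
proof -
  let ?r = "rot n k" and ?r' = "rot n ((n-k) mod n)"
  have k': "(n-k) mod n < n" using assms by simp
  have TD: "T \<subseteq> diagonals n" using assms(3) tri_sub by blast
  have sub: "act ?r T \<subseteq> diagonals n" unfolding act_def using rot_diag[OF assms(1,2)] TD by blast
  have nc: "\<forall>d\<in>act ?r T. \<forall>e\<in>act ?r T. \<not> crosses d e"
  proof (intro ballI notI)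
    fix d e assume "d \<in> act ?r T" "e \<in> act ?r T" "crosses d e"
    then obtain d0 e0 where "d0\<in>T" "e0\<in>T" "d = ?r ` d0" "e = ?r ` e0" unfolding act_def by blast
    moreover have "crosses (?r' ` d) (?r' ` e)"
      using rot_crosses[OF assms(1) _ _ \<open>crosses d e\<close>] rot_img_sub[OF assms(1)] \<open>d = _\<close> \<open>e = _\<close> by blast
    ultimately have "crosses d0 e0" using rot_back(1)[OF assms(1,2)] diag_sub TD by (metis subsetD)
    then show False using assms(3) \<open>d0\<in>T\<close> \<open>e0\<in>T\<close> unfolding triangulation_def by blast
  qed
  have mx: "\<forall>d\<in>diagonals n - act ?r T. \<exists>e\<in>act ?r T. crosses d e"
  proof
    fix d assume d: "d \<in> diagonals n - act ?r T"
    let ?d0 = "?r' ` d"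
    have d0: "?d0 \<in> diagonals n" using rot_diag[OF assms(1) k'] d by blast
    have db: "?r ` ?d0 = d" using rot_back(2)[OF assms(1,2) diag_sub] d by blast
    have "?d0 \<notin> T"
    proof
      assume "?d0 \<in> T" then have "?r ` ?d0 \<in> act ?r T" unfolding act_def by blast
      then show False using db d by simp
    qed
    then obtain e0 where e0: "e0 \<in> T" "crosses ?d0 e0" using assms(3) d0 unfolding triangulation_def by blast
    have "crosses (?r ` ?d0) (?r ` e0)"
      by (rule rot_crosses[OF assms(1) diag_sub[OF d0] diag_sub e0(2)]) (use e0 TD in blast)
    then have "crosses d (?r ` e0)" using db by simp
    moreover have "?r ` e0 \<in> act ?r T" using e0(1) unfolding act_def by blast
    ultimately show "\<exists>e\<in>act ?r T. crosses d e" by blast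
  qed
  show ?thesis unfolding triangulation_def using sub nc mx by blast
qed

lemma sucn_if: "v < n \<Longrightarrow> sucn n v = (if v + 1 = n then 0 else v + 1)"
  unfolding sucn_def by auto

lemma predn_if: assumes v: "v < n" shows "predn n v = (if v = 0 then n - 1 else v - 1)"
proof (cases "v = 0")
  case False
  have e: "v + (n - 1) = (v - 1) + n" using False v by arith
  have "predn n v = ((v - 1) + n) mod n" by (simp only: predn_def e)
  also have "\<dots> = (v - 1) mod n" by (rule mod_add_self2)
  also have "\<dots> = v - 1" using v by simp
  finally show ?thesis using False by simp
qed (use v in \<open>simp add: predn_def\<close>)

lemma sucn_lt: "0 < n \<Longrightarrow> sucn n v < n" unfolding sucn_def by simp
lemma predn_lt: "0 < n \<Longrightarrow> predn n v < n" unfolding predn_def by simp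

lemma side_iff: "{x,y} \<in> poly_sides n \<longleftrightarrow> (x<n \<and> y = sucn n x) \<or> (y<n \<and> x = sucn n y)"
  unfolding sides_alt by (auto simp: doubleton_eq_iff)

definition shortv :: "nat \<Rightarrow> nat set set \<Rightarrow> nat set" where
  "shortv n T = {v. v < n \<and> {predn n v, sucn n v} \<in> T}"

definition ear_of :: "nat \<Rightarrow> nat \<Rightarrow> nat set" where
  "ear_of n v = {predn n v, v, sucn n v}"

lemma ear_inj: assumes "4 \<le> n" shows "inj_on (ear_of n) {..<n}"
proof
  fix u v assume u: "u \<in> {..<n}" and v: "v \<in> {..<n}" and e: "ear_of n u = ear_of n v"
  have "u \<in> ear_of n v" "sucn n u \<in> ear_of n v" "predn n u \<in> ear_of n v"
    using e unfolding ear_of_def by (metis insertCI)+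
  then show "u = v" using u v assms unfolding ear_of_def
    by (auto simp: sucn_if predn_if split: if_splits)
qed

lemma ear_card3: assumes "4 \<le> n" "v < n" shows "card (ear_of n v) = 3"
  using assms unfolding ear_of_def by (auto simp: sucn_if predn_if card_insert_if)

lemma tri_intro:
  assumes "x<n" "y<n" "z<(n::nat)" "x\<noteq>y" "y\<noteq>z" "x\<noteq>z"
    "{x,y} \<in> U" "{y,z} \<in> U" "{x,z} \<in> U"
  shows "\<exists>a b c. {x,y,z} = {a,b,c} \<and> a<b \<and> b<c \<and> c<n \<and> {a,b}\<in>U \<and> {b,c}\<in>U \<and> {a,c}\<in>U"
proof -
  have c: "{x,y} = {y,x}" "{y,z} = {z,y}" "{x,z} = {z,x}" by auto
  consider "x<y" "y<z" | "x<z" "z<y" | "y<x" "x<z" | "y<z" "z<x" | "z<x" "x<y" | "z<y" "y<x"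
    using assms(4,5,6) by linarith
  then show ?thesis
  proof cases
    case 1 then show ?thesis using assms by (intro exI[of _ x] exI[of _ y] exI[of _ z]) simp
  next
    case 2
    have e: "{x,y,z} = {x,z,y}" by blast
    show ?thesis by (rule exI[of _ x], rule exI[of _ z], rule exI[of _ y]) (use assms 2 c e in simp)
  next
    case 3
    have e: "{x,y,z} = {y,x,z}" by blast
    show ?thesis by (rule exI[of _ y], rule exI[of _ x], rule exI[of _ z]) (use assms 3 c e in simp)
  next
    case 4
    have e: "{x,y,z} = {y,z,x}" by blast
    show ?thesis by (rule exI[of _ y], rule exI[of _ z], rule exI[of _ x]) (use assms 4 c e in simp)
  next
    case 5
    have e: "{x,y,z} = {z,x,y}" by blast
    show ?thesis by (rule exI[of _ z], rule exI[of _ x], rule exI[of _ y]) (use assms 5 c e in simp)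
  next
    case 6
    have e: "{x,y,z} = {z,y,x}" by blast
    show ?thesis by (rule exI[of _ z], rule exI[of _ y], rule exI[of _ x]) (use assms 6 c e in simp)
  qed
qed

lemma short_not_side: assumes "4 \<le> n" "v < n" shows "{predn n v, sucn n v} \<notin> poly_sides n"
  using assms unfolding side_iff by (auto simp: sucn_if predn_if predn_lt sucn_lt split: if_splits)

lemma finite_sides: "finite (poly_sides n)"
proof -
  have "poly_sides n = (\<lambda>i. {i, sucn n i}) ` {..<n}" unfolding sides_alt by auto
  then show ?thesis by simp
qed

lemma pair_in3: "x \<in> {a,b,c} \<Longrightarrow> y \<in> {a,b,c} \<Longrightarrow> x \<noteq> y \<Longrightarrow> {x,y} = {a,b} \<or> {x,y} = {b,c} \<or> {x,y} = {a,c}"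
  by auto
lemma four_in3: assumes "card t = 3" "finite t" "{p,q,r,s} \<subseteq> t" "p\<noteq>q" "p\<noteq>r" "p\<noteq>s" "q\<noteq>r" "q\<noteq>s" "r\<noteq>s"
  shows False
proof -
  have "card {p,q,r,s} = 4" using assms by simp
  then show False using card_mono[OF assms(2,3)] assms(1) by simp
qed

lemma ears_eq: assumes "4 \<le> n" "T \<subseteq> diagonals n"
  shows "{t. is_ear n T t} = ear_of n ` shortv n T"
proof (intro equalityI subsetI)
  fix t assume "t \<in> {t. is_ear n T t}"
  then have tt: "t \<in> triangles n T" and cs: "card {s \<in> poly_sides n. s \<subseteq> t} \<ge> 2"
    unfolding is_ear_def by auto
  obtain a b c where abc: "t = {a,b,c}" "a<b" "b<c" "c<n" "{a,b} \<in> T \<union> poly_sides n"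
      "{b,c} \<in> T \<union> poly_sides n" "{a,c} \<in> T \<union> poly_sides n"
    using tt unfolding triangles_def by blast
  have ct: "card t = 3" "finite t" using abc by auto
  obtain s1 s2 where s: "s1 \<in> {s \<in> poly_sides n. s \<subseteq> t}" "s2 \<in> {s \<in> poly_sides n. s \<subseteq> t}" "s1 \<noteq> s2"
  proof -
    have fin: "finite {s \<in> poly_sides n. s \<subseteq> t}" using finite_sides by simp
    have "\<not> (\<forall>x\<in>{s \<in> poly_sides n. s \<subseteq> t}. \<forall>y\<in>{s \<in> poly_sides n. s \<subseteq> t}. x = y)"
      using cs card_le_Suc0_iff_eq[OF fin] by simp
    then show ?thesis using that by blast
  qed
  obtain i j where ij: "s1 = {i, sucn n i}" "s2 = {j, sucn n j}" "i<n" "j<n"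
    using s unfolding sides_alt by blast
  have n0: "0 < n" using assms by simp
  have mem: "{i, sucn n i, j, sucn n j} \<subseteq> t" using s ij by auto
  have ne: "i \<noteq> j" using s ij by auto
  have sij: "sucn n i \<noteq> sucn n j" using ne ij(3,4) by (auto simp: sucn_if split: if_splits)
  have sii: "i \<noteq> sucn n i" "j \<noteq> sucn n j" using ij(3,4) assms by (auto simp: sucn_if)
  have "i = sucn n j \<or> j = sucn n i"
  proof (rule ccontr)
    assume nn: "\<not> (i = sucn n j \<or> j = sucn n i)"
    show False by (rule four_in3[OF ct mem]) (use nn ne sij sii in auto)
  qed
  then obtain v p where vp: "v<n" "p<n" "v = sucn n p" "p \<in> t" "v \<in> t" "sucn n v \<in> t"
  proof
    assume "i = sucn n j" then show ?thesis using that[of i j] mem ij by auto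
  next
    assume "j = sucn n i" then show ?thesis using that[of j i] mem ij by auto
  qed
  have pv: "predn n v = p" using vp by (auto simp: sucn_if predn_if)
  have sub: "ear_of n v \<subseteq> t" using vp pv unfolding ear_of_def by auto
  have teq: "t = ear_of n v" using card_subset_eq[OF _ sub] ear_card3[OF assms(1) vp(1)] ct by auto
  have dist: "predn n v \<noteq> sucn n v" using vp assms by (auto simp: sucn_if predn_if)
  have "{predn n v, sucn n v} \<in> T \<union> poly_sides n"
  proof -
    have "predn n v \<in> {a,b,c}" "sucn n v \<in> {a,b,c}" using teq abc(1) unfolding ear_of_def by auto
    from pair_in3[OF this dist] show ?thesis using abc(5-7) by auto
  qed
  then have "{predn n v, sucn n v} \<in> T" using short_not_side[OF assms(1) vp(1)] by blast
  then show "t \<in> ear_of n ` shortv n T" unfolding shortv_def using teq vp(1) by blast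
next
  fix t assume "t \<in> ear_of n ` shortv n T"
  then obtain v where v: "v < n" "{predn n v, sucn n v} \<in> T" "t = ear_of n v"
    unfolding shortv_def by blast
  have n0: "0 < n" using assms by simp
  have s1: "{predn n v, v} \<in> poly_sides n" unfolding side_iff using v(1) n0
    by (auto simp: sucn_if predn_if predn_lt)
  have s2: "{v, sucn n v} \<in> poly_sides n" unfolding side_iff using v(1) by auto
  have d: "predn n v \<noteq> v" "v \<noteq> sucn n v" "predn n v \<noteq> sucn n v" using v(1) assms
    by (auto simp: sucn_if predn_if)
  obtain a b c where abc: "{predn n v, v, sucn n v} = {a,b,c}" "a<b" "b<c" "c<n" "{a,b}\<in>T \<union> poly_sides n"
     "{b,c}\<in>T \<union> poly_sides n" "{a,c}\<in>T \<union> poly_sides n"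
    using tri_intro[of "predn n v" n v "sucn n v" "T \<union> poly_sides n"] v(1,2) s1 s2 d n0 predn_lt sucn_lt
    by blast
  have "t \<in> triangles n T"
    unfolding triangles_def v(3) ear_of_def abc(1) using abc(2-) by blast
  moreover have "card {s \<in> poly_sides n. s \<subseteq> t} \<ge> 2"
  proof -
    have "{{predn n v, v}, {v, sucn n v}} \<subseteq> {s \<in> poly_sides n. s \<subseteq> t}"
      using s1 s2 v(3) unfolding ear_of_def by auto
    moreover have "card {{predn n v, v}, {v, sucn n v}} = 2" using d by (auto simp: doubleton_eq_iff)
    moreover have "finite {s \<in> poly_sides n. s \<subseteq> t}" using finite_sides by simp
    ultimately show ?thesis by (metis card_mono)
  qed
  ultimately show "t \<in> {t. is_ear n T t}" unfolding is_ear_def by simp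
qed

lemma ear_count: assumes "4 \<le> n" "T \<subseteq> diagonals n"
  shows "card {t. is_ear n T t} = card (shortv n T)"
proof -
  have "inj_on (ear_of n) (shortv n T)" using ear_inj[OF assms(1)] by (rule inj_on_subset) (auto simp: shortv_def)
  then show ?thesis using ears_eq[OF assms] by (simp add: card_image)
qed

lemma tri_nc: "triangulation n T \<Longrightarrow> d \<in> T \<Longrightarrow> e \<in> T \<Longrightarrow> \<not> crosses d e"
  unfolding triangulation_def by blast

lemma tri_max: "triangulation n T \<Longrightarrow> d \<in> diagonals n \<Longrightarrow> d \<notin> T \<Longrightarrow> \<exists>e\<in>T. crosses d e"
  unfolding triangulation_def by blast

lemma crossesI: "a < c \<Longrightarrow> c < b \<Longrightarrow> b < f \<Longrightarrow> crosses {a,b} {c,f}"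
  unfolding crosses_def by blast

lemma doubleton_ord: "{a,b} = {c,d} \<Longrightarrow> (a::nat) < b \<Longrightarrow> c < d \<Longrightarrow> a = c \<and> b = d"
  by (auto simp: doubleton_eq_iff)

lemma cross_short:
  assumes "crosses {a, a+2} e"
  shows "\<exists>x. e = {a+1,x} \<and> (x < a \<or> a+2 < x)"
proof -
  obtain A B C F where h: "({a,a+2} = {A, B} \<and> e = {C, F} \<or> {a,a+2} = {C, F} \<and> e = {A, B})"
    "A < C" "C < B" "B < F" using assms unfolding crosses_def by blast
  show ?thesis
  proof (cases "{a,a+2} = {A, B} \<and> e = {C, F}")
    case True
    then have "A = a" "B = a+2" using doubleton_ord[of a "a+2" A B] h by auto
    then have "C = a+1" using h by auto
    then show ?thesis using True h \<open>B = a+2\<close> by auto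
  next
    case False
    then have e: "{a,a+2} = {C, F}" "e = {A, B}" using h by auto
    then have "C = a" "F = a+2" using doubleton_ord[of a "a+2" C F] h by auto
    then have "B = a+1" using h by auto
    then show ?thesis using e h \<open>C = a\<close> by (auto simp: insert_commute)
  qed
qed

lemma diag_len: assumes "{a,b} \<in> diagonals n" "a < b" shows "a + 2 \<le> b" "b < n"
proof -
  obtain i j where ij: "{a,b} = {i,j}" "i<j" "j<n" "{i,j} \<notin> poly_sides n"
    using assms(1) unfolding diagonals_def by blast
  then have "i = a" "j = b" using doubleton_ord[of a b i j] assms(2) ij(1,2) by blast+
  then show "b < n" using ij(3) by simp
  show "a + 2 \<le> b"
  proof (rule ccontr)
    assume "\<not> a + 2 \<le> b" then have "b = a + 1" using assms(2) by simp
    moreover have "sucn n a = a + 1" using \<open>b<n\<close> \<open>b = a+1\<close> unfolding sucn_def by simp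
    ultimately have "{a,b} \<in> poly_sides n" using \<open>b<n\<close> unfolding side_iff by simp
    then show False using ij(4) \<open>i = a\<close> \<open>j = b\<close> by simp
  qed
qed

lemma ear_inside:
  assumes tri: "triangulation n T" and n4: "4 \<le> n"
  shows "{a,b} \<in> T \<Longrightarrow> a < b \<Longrightarrow> \<exists>v. a<v \<and> v<b \<and> {v-1,v+1} \<in> T"
proof (induction "b - a" arbitrary: a b rule: less_induct)
  case less
  have dg: "{a,b} \<in> diagonals n" using less.prems tri tri_sub by blast
  have ab: "a + 2 \<le> b" "b < n" using diag_len[OF dg less.prems(2)] by auto
  show ?case
  proof (cases "b = a + 2")
    case True then show ?thesis using less.prems by (intro exI[of _ "a+1"]) auto
  next
    case False
    then have b3: "a + 3 \<le> b" using ab by simp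
    let ?d = "{a, a+2}"
    have dd: "?d \<in> diagonals n"
    proof -
      have "?d \<notin> poly_sides n" unfolding side_iff using b3 ab n4 by (auto simp: sucn_def)
      then show ?thesis unfolding diagonals_def using b3 ab by force
    qed
    show ?thesis
    proof (cases "?d \<in> T")
      case True then show ?thesis using b3 by (intro exI[of _ "a+1"]) auto
    next
      case False
      then obtain e where e: "e \<in> T" "crosses ?d e" using tri_max[OF tri dd] by blast
      obtain x where x: "e = {a+1,x}" "x < a \<or> a+2 < x" using cross_short[OF e(2)] by blast
      have "\<not> crosses e {a,b}" "\<not> crosses {a,b} e" using tri_nc[OF tri] e(1) less.prems(1) by blast+
      moreover have "x < a \<Longrightarrow> crosses e {a,b}"
        using crossesI[of x a "a+1" b] b3 x(1) by (simp add: insert_commute)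
      moreover have "b < x \<Longrightarrow> crosses {a,b} e"
        using crossesI[of a "a+1" b x] b3 x(1) by simp
      ultimately have "\<not> x < a" "\<not> b < x" by blast+
      then have xr: "a + 2 < x" "x \<le> b" using x(2) by auto
      have "x - (a+1) < b - a" using xr by simp
      from less.hyps[OF this] e(1) x(1) xr obtain v where "a+1 < v" "v < x" "{v-1,v+1} \<in> T" by auto
      then show ?thesis using xr by (intro exI[of _ v]) auto
    qed
  qed
qed

lemma cross_iff1:
  assumes "a < b" "c < f" "crosses {a,b} {c,f}"
  shows "(a<c \<and> c<b \<and> b<f) \<or> (c<a \<and> a<f \<and> f<b)"
proof -
  obtain A B C F where h: "{a,b} = {A, B} \<and> {c,f} = {C, F} \<or> {a,b} = {C, F} \<and> {c,f} = {A, B}"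
    "A < C" "C < B" "B < F" using assms(3) unfolding crosses_def by blast
  have AB: "A < B" "C < F" using h(2-4) by simp_all
  from h(1) show ?thesis
  proof
    assume e: "{a,b} = {A, B} \<and> {c,f} = {C, F}"
    have "a = A \<and> b = B" using doubleton_ord[OF conjunct1[OF e] assms(1) AB(1)] .
    moreover have "c = C \<and> f = F" using doubleton_ord[OF conjunct2[OF e] assms(2) AB(2)] .
    ultimately show ?thesis using h(2-4) by simp
  next
    assume e: "{a,b} = {C, F} \<and> {c,f} = {A, B}"
    have "a = C \<and> b = F" using doubleton_ord[OF conjunct1[OF e] assms(1) AB(2)] .
    moreover have "c = A \<and> f = B" using doubleton_ord[OF conjunct2[OF e] assms(2) AB(1)] .
    ultimately show ?thesis using h(2-4) by simp
  qed
qed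
lemma cross_iff2:
  assumes "a < b" "c < f" "(a<c \<and> c<b \<and> b<f) \<or> (c<a \<and> a<f \<and> f<b)"
  shows "crosses {a,b} {c,f}"
  using assms(3)
proof
  assume "a<c \<and> c<b \<and> b<f" then show ?thesis by (intro crossesI) auto
next
  assume h: "c<a \<and> a<f \<and> f<b"
  have "crosses {c,f} {a,b}" using h by (intro crossesI) auto
  then show ?thesis unfolding crosses_def by blast
qed
lemma cross_iff:
  assumes "a < b" "c < f"
  shows "crosses {a,b} {c,f} \<longleftrightarrow> (a<c \<and> c<b \<and> b<f) \<or> (c<a \<and> a<f \<and> f<b)"
  using cross_iff1[OF assms] cross_iff2[OF assms] by blast

definition aS :: "nat \<Rightarrow> nat set \<Rightarrow> nat \<Rightarrow> nat" where
  "aS n S k = 1 + card (S \<inter> {k..<n-3})"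

definition tS :: "nat \<Rightarrow> nat set \<Rightarrow> nat set set" where
  "tS n S = {{aS n S k, aS n S k + k + 1} | k. 1 \<le> k \<and> k \<le> n - 3}"

lemma aS_rec: assumes "k < n - 3" shows "aS n S k = (if k \<in> S then 1 else 0) + aS n S (k+1)"
proof -
  have "S \<inter> {k..<n-3} = (if k \<in> S then insert k (S \<inter> {k+1..<n-3}) else S \<inter> {k+1..<n-3})"
    using assms by (auto; metis Suc_leI le_neq_implies_less)
  then show ?thesis unfolding aS_def by simp
qed

lemma aS_top: "aS n S (n-3) = 1" unfolding aS_def by simp

lemma aS_mono: "k \<le> j \<Longrightarrow> aS n S j \<le> aS n S k"
  unfolding aS_def by (auto intro!: card_mono)

lemma aS_mono2: assumes "k \<le> j" shows "aS n S k + k \<le> aS n S j + j"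
proof -
  have "S \<inter> {k..<n-3} \<subseteq> (S \<inter> {j..<n-3}) \<union> {k..<j}" by auto
  then have "card (S \<inter> {k..<n-3}) \<le> card ((S \<inter> {j..<n-3}) \<union> {k..<j})" by (intro card_mono) auto
  also have "\<dots> \<le> card (S \<inter> {j..<n-3}) + card {k..<j}" by (rule card_Un_le)
  finally show ?thesis using assms unfolding aS_def by simp
qed

lemma aS_bound: assumes "k \<le> n - 3" "1 \<le> k" shows "aS n S k + k + 1 \<le> n - 1"
proof -
  have "card (S \<inter> {k..<n-3}) \<le> card {k..<n-3}" by (intro card_mono) auto
  then show ?thesis using assms unfolding aS_def by simp
qed

lemma aS_ge1: "1 \<le> aS n S k" unfolding aS_def by simp

lemma nest_nc: assumes "a < b" "c < f" "c \<le> a" "b \<le> f"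
  shows "\<not> crosses {a,b} {c,f}"
  using assms by (simp add: cross_iff)

lemma tS_mem: "d \<in> tS n S \<longleftrightarrow> (\<exists>k. 1 \<le> k \<and> k \<le> n - 3 \<and> d = {aS n S k, aS n S k + k + 1})"
  unfolding tS_def by blast

lemma tS_diag: assumes "4 \<le> n" shows "tS n S \<subseteq> diagonals n"
proof
  fix d assume "d \<in> tS n S"
  then obtain k where k: "1 \<le> k" "k \<le> n - 3" "d = {aS n S k, aS n S k + k + 1}" unfolding tS_mem by blast
  let ?a = "aS n S k"
  have b: "?a + k + 1 \<le> n - 1" "1 \<le> ?a" using aS_bound[OF k(2,1)] aS_ge1 by auto
  have "sucn n ?a = ?a + 1" unfolding sucn_def using b k by simp
  moreover have "sucn n (?a + k + 1) \<noteq> ?a" unfolding sucn_def using b k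
    by (cases "?a + k + 1 + 1 = n") auto
  ultimately have "d \<notin> poly_sides n" unfolding k(3) side_iff using k by auto
  moreover have "\<exists>i j. d = {i,j} \<and> i<n \<and> j<n \<and> i\<noteq>j"
    using k b by (intro exI[of _ ?a] exI[of _ "?a+k+1"]) auto
  ultimately show "d \<in> diagonals n" unfolding diag_alt by blast
qed

lemma tS_chain: assumes "k \<le> j"
  shows "aS n S j \<le> aS n S k" "aS n S k + k + 1 \<le> aS n S j + j + 1"
  using aS_mono[OF assms] aS_mono2[OF assms] by auto

lemma tS_nc: assumes "d \<in> tS n S" "e \<in> tS n S" shows "\<not> crosses d e"
proof -
  obtain k where k: "1 \<le> k" "k \<le> n - 3" "d = {aS n S k, aS n S k + k + 1}" using assms(1) unfolding tS_mem by blast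
  obtain j where j: "1 \<le> j" "j \<le> n - 3" "e = {aS n S j, aS n S j + j + 1}" using assms(2) unfolding tS_mem by blast
  show ?thesis
  proof (cases "k \<le> j")
    case True
    show ?thesis unfolding k(3) j(3) by (rule nest_nc) (use tS_chain[OF True, of n S] in auto)
  next
    case False
    then have "j \<le> k" by simp
    from tS_chain[OF this, of n S] show ?thesis unfolding k(3) j(3) by (simp add: cross_iff)
  qed
qed

lemma tS_in: "1 \<le> k \<Longrightarrow> k \<le> n - 3 \<Longrightarrow> {aS n S k, aS n S k + k + 1} \<in> tS n S"
  unfolding tS_mem by blast

lemma tS_top: assumes n4: "4 \<le> n" shows "{1, n - 1} \<in> tS n S"
proof -
  have "{aS n S (n-3), aS n S (n-3) + (n-3) + 1} \<in> tS n S" by (rule tS_in) (use n4 in auto)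
  moreover have "1 + (n-3) + 1 = n - 1" using n4 by simp
  ultimately show ?thesis using aS_top[of n S] by simp
qed

lemma tS_max: assumes n4: "4 \<le> n" and d: "d \<in> diagonals n" "d \<notin> tS n S"
  shows "\<exists>e\<in>tS n S. crosses d e"
proof -
  obtain x y where xy: "d = {x,y}" "x<y" "y<n" "{x,y} \<notin> poly_sides n" using d(1) unfolding diagonals_def by blast
  have x2: "x + 2 \<le> y" using diag_len[OF d(1)[unfolded xy(1)] xy(2)] by simp
  have top: "{1, n - 1} \<in> tS n S" using tS_top[OF n4] .
  show ?thesis
  proof (cases "x = 0")
    case True
    have "y \<noteq> n - 1"
    proof
      assume "y = n - 1"
      then have "sucn n y = x" using True xy(3) unfolding sucn_def by simp
      then show False using xy(3,4) side_iff by blast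
    qed
    then have "crosses d {1, n-1}" unfolding xy(1) using True x2 xy(3) n4 by (subst cross_iff) auto
    then show ?thesis using top by blast
  next
    case False
    define P where "P j \<longleftrightarrow> 1 \<le> j \<and> j \<le> n-3 \<and> aS n S j \<le> x \<and> y \<le> aS n S j + j + 1" for j
    have Ptop: "P (n-3)" unfolding P_def using n4 False xy(3) aS_top[of n S] by simp arith
    define j0 where "j0 = (LEAST j. P j)"
    have Pj0: "P j0" unfolding j0_def by (rule LeastI[of P, OF Ptop])
    have notin: "\<And>k. 1 \<le> k \<Longrightarrow> k \<le> n - 3 \<Longrightarrow> d \<noteq> {aS n S k, aS n S k + k + 1}"
      using d(2) tS_in by blast
    have "j0 \<noteq> 1"
    proof
      assume "j0 = 1"
      then have "aS n S 1 \<le> x" "y \<le> aS n S 1 + 2" using Pj0 unfolding P_def by auto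
      then have "x = aS n S 1" "y = aS n S 1 + 1 + 1" using x2 by auto
      moreover have "1 \<le> n - 3" using n4 by simp
      ultimately show False using notin[of 1] xy(1) by simp
    qed
    then have j02: "2 \<le> j0" using Pj0 unfolding P_def by simp
    define j where "j = j0 - 1"
    have j: "1 \<le> j" "j < n - 3" "j0 = j + 1" using j02 Pj0 unfolding j_def P_def by auto
    have nPj: "\<not> P j" unfolding j0_def j_def by (rule not_less_Least) (use j02 in \<open>simp add: j0_def\<close>)
    have P1: "aS n S (j+1) \<le> x" "y \<le> aS n S (j+1) + (j+1) + 1" using Pj0 unfolding P_def j(3) by auto
    have neq: "d \<noteq> {aS n S (j+1), aS n S (j+1) + (j+1) + 1}" using notin[of "j+1"] j by simp
    have rec: "aS n S j = (if j \<in> S then 1 else 0) + aS n S (j+1)" using aS_rec j(2) by blast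
    have notP: "\<not> (aS n S j \<le> x \<and> y \<le> aS n S j + j + 1)" using nPj j unfolding P_def by auto
    show ?thesis
    proof (cases "j \<in> S")
      case True
      then have aj: "aS n S j = aS n S (j+1) + 1" using rec by simp
      then have "x = aS n S (j+1)" using notP P1 by auto
      then have "y < aS n S (j+1) + (j+1) + 1" using P1 neq xy(1) by (cases "y = aS n S (j+1) + (j+1) + 1") auto
      then have "crosses d {aS n S j, aS n S j + j + 1}"
        unfolding xy(1) using aj \<open>x = _\<close> x2 xy(2) by (subst cross_iff) auto
      then show ?thesis using tS_in[of j n S] j by auto
    next
      case False
      then have aj: "aS n S j = aS n S (j+1)" using rec by simp
      then have "y = aS n S (j+1) + (j+1) + 1" using notP P1 by auto
      then have "aS n S (j+1) < x" using P1 neq xy(1) by (cases "x = aS n S (j+1)") auto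
      then have "crosses d {aS n S j, aS n S j + j + 1}"
        unfolding xy(1) using aj \<open>y = _\<close> x2 xy(2) by (subst cross_iff) auto
      then show ?thesis using tS_in[of j n S] j by auto
    qed
  qed
qed

lemma tS_tri: assumes "4 \<le> n" shows "triangulation n (tS n S)"
  unfolding triangulation_def
proof (intro conjI ballI)
  show "tS n S \<subseteq> diagonals n" by (rule tS_diag[OF assms])
  show "\<And>d e. d \<in> tS n S \<Longrightarrow> e \<in> tS n S \<Longrightarrow> \<not> crosses d e" by (rule tS_nc)
  show "\<And>d. d \<in> diagonals n - tS n S \<Longrightarrow> \<exists>e\<in>tS n S. crosses d e"
    using tS_max[OF assms] by simp
qed

lemma tS_pos: assumes "d \<in> tS n S" shows "0 \<notin> d"
proof -
  obtain k where "d = {aS n S k, aS n S k + k + 1}" using assms unfolding tS_mem by blast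
  then show ?thesis using aS_ge1[of n S k] by simp
qed

lemma tS_short: assumes n4: "4 \<le> n" shows "shortv n (tS n S) = {0, aS n S 1 + 1}"
proof (intro equalityI subsetI)
  fix v assume "v \<in> shortv n (tS n S)"
  then have v: "v < n" "{predn n v, sucn n v} \<in> tS n S" unfolding shortv_def by auto
  then obtain k where k: "1 \<le> k" "k \<le> n - 3" "{predn n v, sucn n v} = {aS n S k, aS n S k + k + 1}"
    unfolding tS_mem by blast
  show "v \<in> {0, aS n S 1 + 1}"
  proof (cases "v = 0")
    case False
    have "v \<noteq> n - 1"
    proof
      assume "v = n - 1" then have "sucn n v = 0" unfolding sucn_def using n4 by simp
      then show False using tS_pos[OF v(2)] by auto
    qed
    then have pv: "predn n v = v - 1" "sucn n v = v + 1" using False v(1) by (auto simp: predn_if sucn_if)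
    have "v - 1 < v + 1" using False by simp
    from doubleton_ord[OF k(3)[unfolded pv] this] have e: "v - 1 = aS n S k" "v + 1 = aS n S k + k + 1" by auto
    then have "k = 1" using False by linarith
    then have "v = aS n S 1 + 1" using e False by simp
    then show ?thesis by simp
  qed simp
next
  fix v assume "v \<in> {0, aS n S 1 + 1}"
  then show "v \<in> shortv n (tS n S)"
  proof
    assume v0: "v = 0"
    have "predn n 0 = n - 1" "sucn n 0 = 1" using n4 by (auto simp: predn_if sucn_if)
    moreover have "{1, n - 1} \<in> tS n S" using tS_top[OF n4] .
    ultimately show ?thesis unfolding shortv_def v0 using n4 by (simp add: insert_commute)
  next
    assume "v \<in> {aS n S 1 + 1}"
    then have vv: "v = aS n S 1 + 1" by simp
    have b: "aS n S 1 + 1 + 1 \<le> n - 1" using aS_bound[of 1 n S] n4 by simp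
    then have "predn n v = aS n S 1" "sucn n v = aS n S 1 + 1 + 1" unfolding vv using n4 by (auto simp: predn_if sucn_if)
    moreover have "{aS n S 1, aS n S 1 + 1 + 1} \<in> tS n S" using tS_in[of 1 n S] n4 by simp
    ultimately show ?thesis unfolding shortv_def using vv b by simp
  qed
qed

lemma tS_two: assumes n4: "4 \<le> n" shows "tS n S \<in> two_eared_triangulations n"
proof -
  have "card {t. is_ear n (tS n S) t} = card (shortv n (tS n S))"
    by (rule ear_count[OF n4 tS_diag[OF n4]])
  also have "\<dots> = 2" unfolding tS_short[OF n4] by simp
  finally show ?thesis unfolding two_eared_triangulations_def using tS_tri[OF n4] by simp
qed

lemma crosses_sym: "crosses d e \<longleftrightarrow> crosses e d"
  unfolding crosses_def by blast

lemma diag_interior: assumes "1 \<le> x" "x + 2 \<le> y" "y \<le> n - 1" shows "{x,y} \<in> diagonals n"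
proof -
  have "sucn n x = x + 1" unfolding sucn_def using assms by simp
  moreover have "sucn n y \<noteq> x" unfolding sucn_def using assms
    by (cases "y + 1 = n") auto
  ultimately have "{x,y} \<notin> poly_sides n" unfolding side_iff using assms by auto
  moreover have "\<exists>i j. {x,y} = {i,j} \<and> i<n \<and> j<n \<and> i\<noteq>j"
    using assms by (intro exI[of _ x] exI[of _ y]) auto
  ultimately show ?thesis unfolding diag_alt by blast
qed

locale snake =
  fixes n :: nat and T :: "nat set set" and w :: nat
  assumes tri: "triangulation n T" and n4: "4 \<le> n" and top: "{1, n-1} \<in> T"
    and sh: "shortv n T = {0, w}" and w0: "w \<noteq> 0"
begin

lemma Tform: assumes "d \<in> T" shows "\<exists>a b. d = {a,b} \<and> 1 \<le> a \<and> a < w \<and> w < b \<and> b \<le> n - 1"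
proof -
  have dd: "d \<in> diagonals n" using assms tri tri_sub by blast
  then obtain a b where ab: "d = {a,b}" "a < b" "b < n" "{a,b} \<notin> poly_sides n" unfolding diagonals_def by blast
  have a2: "a + 2 \<le> b" using diag_len[OF dd[unfolded ab(1)] ab(2)] by simp
  have a1: "a \<noteq> 0"
  proof
    assume a0: "a = 0"
    have "b \<noteq> n - 1"
    proof
      assume "b = n - 1" then have "sucn n b = a" using a0 ab(3) unfolding sucn_def by simp
      then show False using ab(3,4) side_iff by blast
    qed
    then have "crosses {a,b} {1, n-1}" using a0 a2 ab(3) n4 by (subst cross_iff) auto
    then show False using tri_nc[OF tri] assms top ab(1) by blast
  qed
  obtain v where v: "a < v" "v < b" "{v-1, v+1} \<in> T" using ear_inside[OF tri n4] assms ab by blast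
  have "predn n v = v - 1" "sucn n v = v + 1" using v ab(3) by (auto simp: predn_if sucn_if)
  then have "v \<in> shortv n T" unfolding shortv_def using v ab(3) by simp
  then have "v = w" using sh v(1) by auto
  then show ?thesis using ab v a1 by (intro exI[of _ a] exI[of _ b]) auto
qed

lemma nested:
  assumes "{a,b} \<in> T" "{c,f} \<in> T" "a < w" "w < b" "c < w" "w < f"
  shows "(a \<le> c \<and> f \<le> b) \<or> (c \<le> a \<and> b \<le> f)"
proof -
  have "\<not> crosses {a,b} {c,f}" using tri_nc[OF tri] assms(1,2) by blast
  then show ?thesis using assms(3-6) by (subst (asm) cross_iff) auto
qed

lemma Tform2: assumes "{a,b} \<in> T" "a < b" shows "1 \<le> a \<and> a < w \<and> w < b \<and> b \<le> n - 1"
proof -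
  obtain x y where xy: "{a,b} = {x,y}" "1 \<le> x" "x < w" "w < y" "y \<le> n - 1" using Tform[OF assms(1)] by blast
  have "x < y" using xy(3,4) by simp
  have "a = x \<and> b = y" by (rule doubleton_ord[OF xy(1) assms(2) \<open>x < y\<close>])
  then show ?thesis using xy(2-5) by simp
qed

lemma uniq: assumes "{a, a+L} \<in> T" "{c, c+L} \<in> T" "0 < L" shows "a = c"
proof -
  have "1 \<le> a \<and> a < w \<and> w < a + L \<and> a + L \<le> n - 1" using Tform2[OF assms(1)] assms(3) by simp
  moreover have "1 \<le> c \<and> c < w \<and> w < c + L \<and> c + L \<le> n - 1" using Tform2[OF assms(2)] assms(3) by simp
  ultimately show ?thesis using nested[OF assms(1,2)] by auto
qed

definition has where "has L \<longleftrightarrow> (\<exists>a. {a, a+L} \<in> T)"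

lemma has_bounds: assumes "{a, a+L} \<in> T" shows "2 \<le> L" "L \<le> n - 2" "1 \<le> a" "a < w" "w < a + L" "a + L \<le> n - 1"
proof -
  have "a \<noteq> a + L"
  proof
    assume "a = a + L" then have e: "{a, a+L} = {a}" by simp
    have "{a} \<in> diagonals n" using assms tri tri_sub e by auto
    then obtain i j where ij: "{a} = {i,j}" "i \<noteq> j" unfolding diag_alt by blast
    have "i \<in> {a}" "j \<in> {a}" using ij(1) by simp_all
    then show False using ij(2) by simp
  qed
  then have "a < a + L" by simp
  from Tform2[OF assms this] show "1 \<le> a" "a < w" "w < a + L" "a + L \<le> n - 1" by auto
  then show "2 \<le> L" "L \<le> n - 2" by auto
qed

lemma w_ear: "w < n - 1" "{w - 1, w - 1 + 2} \<in> T"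
proof -
  have wv: "w < n" "{predn n w, sucn n w} \<in> T" using sh unfolding shortv_def by auto
  have "w \<noteq> n - 1"
  proof
    assume "w = n - 1" then have "sucn n w = 0" unfolding sucn_def using n4 by simp
    then obtain a b where ab: "{predn n w, sucn n w} = {a,b}" "1 \<le> a" "a < w" "w < b" using Tform[OF wv(2)] by blast
    have "0 \<in> {a,b}" using ab(1) \<open>sucn n w = 0\<close> by (metis insertCI)
    then show False using ab(2-4) by auto
  qed
  then show "w < n - 1" using wv by simp
  then have "predn n w = w - 1" "sucn n w = w - 1 + 2" using w0 by (auto simp: predn_if sucn_if)
  then show "{w - 1, w - 1 + 2} \<in> T" using wv by simp
qed

lemma has_all: assumes "2 \<le> L" "L \<le> n - 2" shows "has L"
proof (rule ccontr)
  assume nh: "\<not> has L"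
  have h2: "has 2" unfolding has_def using w_ear by blast
  have e: "1 + (n - 2) = n - 1" using n4 by simp
  have hn: "has (n-2)" unfolding has_def using top e by (intro exI[of _ 1]) simp
  define A where "A = {l. l < L \<and> has l}"
  define B where "B = {l. L < l \<and> l \<le> n - 2 \<and> has l}"
  have L2: "2 < L" "L < n - 2" using nh h2 hn assms by (auto simp: le_less)
  have Af: "finite A" "A \<noteq> {}" unfolding A_def using h2 L2 by auto
  have Bf: "finite B" "B \<noteq> {}" unfolding B_def using hn L2 by auto
  define l1 where "l1 = Max A"
  define l2 where "l2 = Min B"
  have l1: "l1 < L" "has l1" using Max_in[OF Af] unfolding l1_def A_def by auto
  have l2: "L < l2" "has l2" "l2 \<le> n - 2" using Min_in[OF Bf] unfolding l2_def B_def by auto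
  obtain a1 where a1: "{a1, a1 + l1} \<in> T" using l1(2) unfolding has_def by blast
  obtain a2 where a2: "{a2, a2 + l2} \<in> T" using l2(2) unfolding has_def by blast
  note b1 = has_bounds[OF a1] and b2 = has_bounds[OF a2]
  have nest: "a2 \<le> a1" "a1 + l1 \<le> a2 + l2"
    using nested[OF a1 a2 b1(4,5) b2(4,5)] l1 l2 by auto
  define c where "c = (if L + a2 \<le> a1 + l1 then a1 + l1 - L else a2)"
  have c: "a2 \<le> c" "c \<le> a1" "a1 + l1 \<le> c + L" "c + L \<le> a2 + l2"
    unfolding c_def using nest l1 l2 by auto
  have ed: "{c, c+L} \<in> diagonals n" using diag_interior[of c "c+L" n] c b2 assms by simp
  have "{c, c+L} \<notin> T" using nh unfolding has_def by blast
  then obtain f where f: "f \<in> T" "crosses {c,c+L} f" using tri_max[OF tri ed] by blast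
  obtain p q where pq: "f = {p,q}" "1 \<le> p" "p < w" "w < q" "q \<le> n - 1" using Tform[OF f(1)] by blast
  define lf where "lf = q - p"
  have fq: "q = p + lf" unfolding lf_def using pq by simp
  have hf: "has lf" unfolding has_def using f(1) pq(1) fq by blast
  have "lf \<noteq> L" using hf nh by blast
  then consider "lf < L" | "L < lf" by linarith
  then show False
  proof cases
    case 1
    then have "lf \<le> l1" using Max_ge[OF Af(1)] hf unfolding l1_def A_def by auto
    have "(a1 \<le> p \<and> q \<le> a1 + l1) \<or> (p \<le> a1 \<and> a1 + l1 \<le> q)"
      using nested[OF a1 f(1)[unfolded pq(1)] b1(4,5) pq(3,4)] .
    then have "c \<le> p" "q \<le> c + L" using \<open>lf \<le> l1\<close> c fq by auto
    then have "\<not> crosses {p,q} {c, c+L}" using pq by (intro nest_nc) auto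
    then show False using f(2) pq(1) crosses_sym by blast
  next
    case 2
    then have "l2 \<le> lf" using Min_le[OF Bf(1)] hf pq fq unfolding l2_def B_def by auto
    have "(a2 \<le> p \<and> q \<le> a2 + l2) \<or> (p \<le> a2 \<and> a2 + l2 \<le> q)"
      using nested[OF a2 f(1)[unfolded pq(1)] b2(4,5) pq(3,4)] .
    then have "p \<le> c" "c + L \<le> q" using \<open>l2 \<le> lf\<close> c fq by auto
    then have "\<not> crosses {c, c+L} {p,q}" using pq L2 by (intro nest_nc) auto
    then show False using f(2) pq(1) by blast
  qed
qed

end

context snake begin

definition lft where "lft L = (THE a. {a, a+L} \<in> T)"

lemma lft_eq: assumes "{a, a+L} \<in> T" shows "lft L = a"
proof -
  have "0 < L" using has_bounds(1)[OF assms] by simp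
  then show ?thesis unfolding lft_def using assms uniq by blast
qed

lemma lft_in: assumes "2 \<le> L" "L \<le> n - 2" shows "{lft L, lft L + L} \<in> T"
proof -
  obtain a where a: "{a, a+L} \<in> T" using has_all[OF assms] unfolding has_def by blast
  then show ?thesis using lft_eq[OF a] by simp
qed

definition S0 where "S0 = {k \<in> {1..<n-3}. lft (k+1) = lft (k+2) + 1}"

lemma lft_aS: assumes "1 \<le> k" "k \<le> n - 3" shows "lft (k+1) = aS n S0 k"
  using assms(2,1)
proof (induction k rule: inc_induct)
  case base
  have e: "1 + (n - 3 + 1) = n - 1" using n4 by simp
  have "lft (n - 3 + 1) = 1" by (rule lft_eq) (use top e in simp)
  then show ?case using aS_top[of n S0] by simp
next
  case (step k)
  have IH: "lft (k+2) = aS n S0 (k+1)" using step.IH step.prems by simp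
  have rec: "aS n S0 k = (if k \<in> S0 then 1 else 0) + aS n S0 (k+1)" using aS_rec step.hyps(2) by blast
  let ?p = "lft (k+1)" and ?q = "lft (k+2)"
  have p: "{?p, ?p + (k+1)} \<in> T" using lft_in[of "k+1"] step n4 by simp
  have q: "{?q, ?q + (k+2)} \<in> T" using lft_in[of "k+2"] step n4 by simp
  note bp = has_bounds[OF p] and bq = has_bounds[OF q]
  have "(?p \<le> ?q \<and> ?q + (k+2) \<le> ?p + (k+1)) \<or> (?q \<le> ?p \<and> ?p + (k+1) \<le> ?q + (k+2))"
    using nested[OF p q bp(4,5) bq(4,5)] .
  then have pq: "?q \<le> ?p" "?p \<le> ?q + 1" by auto
  have "k \<in> S0 \<longleftrightarrow> ?p = ?q + 1" unfolding S0_def using step by auto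
  then have "?p = (if k \<in> S0 then 1 else 0) + ?q" using pq by auto
  then show ?case using rec IH by simp
qed

lemma T_eq: "T = tS n S0"
proof (intro equalityI subsetI)
  fix d assume d: "d \<in> T"
  obtain a b where ab: "d = {a,b}" "1 \<le> a" "a < w" "w < b" "b \<le> n - 1" using Tform[OF d] by blast
  define L where "L = b - a"
  have bL: "b = a + L" unfolding L_def using ab by simp
  have dT: "{a, a + L} \<in> T" using d ab(1) bL by simp
  note hb = has_bounds[OF dT]
  have "lft L = a" by (rule lft_eq[OF dT])
  moreover have "lft ((L - 1) + 1) = aS n S0 (L - 1)" by (rule lft_aS) (use hb in auto)
  ultimately have "aS n S0 (L - 1) = a" using hb by simp
  then have "d = {aS n S0 (L-1), aS n S0 (L-1) + (L-1) + 1}" using ab(1) bL hb by simp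
  then show "d \<in> tS n S0" unfolding tS_mem using hb by (intro exI[of _ "L - 1"]) auto
next
  fix d assume "d \<in> tS n S0"
  then obtain k where k: "1 \<le> k" "k \<le> n - 3" "d = {aS n S0 k, aS n S0 k + k + 1}" unfolding tS_mem by blast
  have "lft (k+1) = aS n S0 k" by (rule lft_aS[OF k(1,2)])
  moreover have "{lft (k+1), lft (k+1) + (k+1)} \<in> T" by (rule lft_in) (use k n4 in auto)
  ultimately show "d \<in> T" using k(3) by (simp add: add.assoc)
qed

lemma S0_sub: "S0 \<subseteq> {1..<n-3}" unfolding S0_def by auto

end

lemma two_eared_canon:
  assumes tri: "triangulation n T" and n4: "4 \<le> n" and c2: "card (shortv n T) = 2" and z: "0 \<in> shortv n T"
  shows "\<exists>S. S \<subseteq> {1..<n-3} \<and> T = tS n S"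
proof -
  obtain x y where xy: "shortv n T = {x,y}" "x \<noteq> y" using c2 by (auto simp: card_2_iff)
  obtain w where w: "shortv n T = {0,w}" "w \<noteq> 0"
  proof (cases "x = 0")
    case True then show ?thesis using that xy by auto
  next
    case False then have "y = 0" using z xy by auto
    then show ?thesis using that[of x] xy False by (auto simp: insert_commute)
  qed
  have "{predn n 0, sucn n 0} \<in> T" using z unfolding shortv_def by simp
  moreover have "predn n 0 = n - 1" "sucn n 0 = 1" using n4 by (auto simp: predn_if sucn_if)
  ultimately have top: "{1, n-1} \<in> T" by (simp add: insert_commute)
  interpret snake n T w by unfold_locales (use tri n4 top w in auto)
  show ?thesis using T_eq S0_sub by blast
qed

definition rfl :: "nat \<Rightarrow> nat \<Rightarrow> nat \<Rightarrow> nat" where "rfl n k i = (k + (n - i)) mod n"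

lemma dihedral_alt: "dihedral n = {rot n k | k. k < n} \<union> {rfl n k | k. k < n}"
  unfolding dihedral_def rot_def[abs_def] rfl_def[abs_def] by simp

lemma modeq: "x = y \<Longrightarrow> (x::nat) mod n = y mod n" by simp
lemma modeqn: "y = x + n \<Longrightarrow> (x::nat) mod n = y mod n" by simp

lemma comp_rr: "i < n \<Longrightarrow> rot n k (rot n j i) = rot n ((j+k) mod n) i"
  unfolding rot_def by (simp add: mod_add_left_eq mod_add_right_eq ac_simps)

lemma comp_rf: "rot n k (rfl n j i) = rfl n ((j+k) mod n) i"
proof -
  have "rot n k (rfl n j i) = (j + (n-i) + k) mod n" unfolding rot_def rfl_def by (simp only: mod_add_left_eq)
  moreover have "rfl n ((j+k) mod n) i = (j + k + (n-i)) mod n" unfolding rfl_def by (simp only: mod_add_left_eq)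
  moreover have "j + (n-i) + k = j + k + (n-i)" by simp
  ultimately show ?thesis by simp
qed

lemma comp_fr: assumes "i < n" "j < n" shows "rfl n k (rot n j i) = rfl n ((k + (n - j)) mod n) i"
proof -
  have "rfl n ((k + (n - j)) mod n) i = (k + (n - j) + (n - i)) mod n"
    unfolding rfl_def by (simp add: mod_add_left_eq)
  moreover have "rfl n k (rot n j i) = (k + (n - (i + j) mod n)) mod n" unfolding rfl_def rot_def ..
  moreover have "(k + (n - (i + j) mod n)) mod n = (k + (n - j) + (n - i)) mod n"
  proof (cases "i + j < n")
    case True then show ?thesis using assms by (intro modeqn) auto
  next
    case False
    then have "(i + j) mod n = i + j - n" using assms by (simp add: mod_lt2)
    then show ?thesis using assms False by (intro modeq) auto
  qed
  ultimately show ?thesis by simp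
qed

lemma comp_ff: assumes "i < n" "j < n" shows "rfl n k (rfl n j i) = rot n ((k + (n - j)) mod n) i"
proof -
  have "rot n ((k + (n - j)) mod n) i = (i + (k + (n - j))) mod n"
    unfolding rot_def by (simp add: mod_add_right_eq)
  moreover have "rfl n k (rfl n j i) = (k + (n - (j + (n - i)) mod n)) mod n" unfolding rfl_def ..
  moreover have "(k + (n - (j + (n - i)) mod n)) mod n = (i + (k + (n - j))) mod n"
  proof (cases "j + (n - i) < n")
    case True
    then have "(j + (n - i)) mod n = j + (n - i)" by simp
    then show ?thesis using assms True by (intro modeqn) auto
  next
    case False
    then have "(j + (n - i)) mod n = j + (n - i) - n" using assms by (simp add: mod_lt2)
    then show ?thesis using assms False by (intro modeq) auto
  qed
  ultimately show ?thesis by simp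
qed

lemma dih_lt: "g \<in> dihedral n \<Longrightarrow> 0 < n \<Longrightarrow> g i < n"
  unfolding dihedral_def by auto

lemma dih_comp: assumes "g \<in> dihedral n" "h \<in> dihedral n" "0 < n"
  shows "\<exists>c\<in>dihedral n. \<forall>i<n. g (h i) = c i"
proof -
  have m: "\<And>x. x mod n < n" using assms(3) by simp
  from assms(1) obtain k where g: "k < n" "g = rot n k \<or> g = rfl n k" unfolding dihedral_alt by blast
  from assms(2) obtain j where h: "j < n" "h = rot n j \<or> h = rfl n j" unfolding dihedral_alt by blast
  show ?thesis
  proof (cases "g = rot n k")
    case gr: True
    show ?thesis
    proof (cases "h = rot n j")
      case True then show ?thesis using gr comp_rr m unfolding dihedral_alt by blast
    next
      case False then have "h = rfl n j" using h by blast
      then show ?thesis using gr comp_rf m unfolding dihedral_alt by blast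
    qed
  next
    case False then have gf: "g = rfl n k" using g by blast
    show ?thesis
    proof (cases "h = rot n j")
      case True then show ?thesis using gf comp_fr[OF _ h(1)] m unfolding dihedral_alt by blast
    next
      case False then have "h = rfl n j" using h by blast
      then show ?thesis using gf comp_ff[OF _ h(1)] m unfolding dihedral_alt by blast
    qed
  qed
qed

lemma rot0: "i < n \<Longrightarrow> rot n 0 i = i" unfolding rot_def by simp

lemma dih_inv: assumes "h \<in> dihedral n" "0 < n" shows "\<exists>h'\<in>dihedral n. \<forall>i<n. h' (h i) = i"
proof -
  from assms(1) obtain j where h: "j < n" "h = rot n j \<or> h = rfl n j" unfolding dihedral_alt by blast
  show ?thesis
  proof (cases "h = rot n j")
    case True
    have "rot n ((n-j) mod n) \<in> dihedral n" unfolding dihedral_alt using assms(2) by auto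
    then show ?thesis using rot_inv[OF h(1)] True by blast
  next
    case False then have hf: "h = rfl n j" using h by blast
    have "\<And>i. i < n \<Longrightarrow> rfl n j (rfl n j i) = i"
    proof -
      fix i assume i: "i < n"
      have "rfl n j (rfl n j i) = rot n ((j + (n - j)) mod n) i" by (rule comp_ff[OF i h(1)])
      also have "\<dots> = i" using h(1) i by (simp add: rot_def)
      finally show "rfl n j (rfl n j i) = i" .
    qed
    moreover have "rfl n j \<in> dihedral n" unfolding dihedral_alt using h(1) by auto
    ultimately show ?thesis using hf by blast
  qed
qed

lemma dih_fix0: assumes "g \<in> dihedral n" "g 0 = 0" "0 < n"
  shows "(\<forall>i<n. g i = i) \<or> (\<forall>i<n. g i = rfl n 0 i)"
proof -
  from assms(1) obtain k where g: "k < n" "g = rot n k \<or> g = rfl n k" unfolding dihedral_alt by blast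
  show ?thesis
  proof (cases "g = rot n k")
    case True
    then have "k = 0" using assms(2) g(1) unfolding rot_def by simp
    then show ?thesis using True rot0 by simp
  next
    case False
    then have "g = rfl n k" using g by blast
    moreover then have "k = 0" using assms(2) g(1) unfolding rfl_def by simp
    ultimately show ?thesis by simp
  qed
qed

lemma rfl_if: assumes "k < n" "i < n" shows "rfl n k i = (if i \<le> k then k - i else k + n - i)"
proof -
  have "k + (n - i) < 2 * n" using assms by simp
  from mod_lt2[OF this] show ?thesis unfolding rfl_def using assms by auto
qed

lemma rot_if: assumes "k < n" "i < n" shows "rot n k i = (if i + k < n then i + k else i + k - n)"
proof -
  have "i + k < 2 * n" using assms by simp
  from mod_lt2[OF this] show ?thesis unfolding rot_def .
qed

lemma dih_ps: assumes "g \<in> dihedral n" "v < n" "0 < n"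
  shows "{g (predn n v), g (sucn n v)} = {predn n (g v), sucn n (g v)}"
proof -
  from assms(1) obtain k where g: "k < n" "g = rot n k \<or> g = rfl n k" unfolding dihedral_alt by blast
  show ?thesis
  proof (cases "g = rot n k")
    case True then show ?thesis using rot_sucn rot_predn assms(3) by simp
  next
    case False then have gf: "g = rfl n k" using g by blast
    have pl: "predn n v < n" "sucn n v < n" "rfl n k v < n" using assms predn_lt sucn_lt by (auto simp: rfl_def)
    note A = rfl_if[OF g(1) pl(1)] and B = rfl_if[OF g(1) pl(2)] and C = sucn_if[OF pl(3)]
      and D = predn_if[OF pl(3)] and E = rfl_if[OF g(1) assms(2)] and F = predn_if[OF assms(2)] and G = sucn_if[OF assms(2)]
    have "rfl n k (predn n v) = sucn n (rfl n k v)"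
      unfolding A C unfolding E F using assms g(1) by (auto split: if_splits)
    moreover have "rfl n k (sucn n v) = predn n (rfl n k v)"
      unfolding B D unfolding E G using assms g(1) by (auto split: if_splits)
    ultimately have "rfl n k (predn n v) = sucn n (rfl n k v)" "rfl n k (sucn n v) = predn n (rfl n k v)" by blast+
    then show ?thesis using gf by auto
  qed
qed

lemma dih_bij: assumes "g \<in> dihedral n" "0 < n" shows "inj_on g {..<n}" "g ` {..<n} = {..<n}"
proof -
  obtain h' where h': "\<forall>i<n. h' (g i) = i" using dih_inv[OF assms] by blast
  show inj: "inj_on g {..<n}" by (rule inj_on_inverseI[of _ h']) (use h' in auto)
  show "g ` {..<n} = {..<n}" by (rule endo_inj_surj) (use inj dih_lt[OF assms(1) assms(2)] in auto)
qed

lemma act_short: assumes "g \<in> dihedral n" "4 \<le> n" "T \<subseteq> diagonals n"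
  shows "shortv n (act g T) = g ` shortv n T"
proof (intro equalityI subsetI)
  have n0: "0 < n" using assms by simp
  note bij = dih_bij[OF assms(1) n0]
  fix u assume u: "u \<in> shortv n (act g T)"
  then have "u < n" unfolding shortv_def by simp
  then obtain v where v: "v < n" "u = g v" using bij(2) by (metis imageE lessThan_iff)
  from u obtain d where d: "d \<in> T" "{predn n u, sucn n u} = g ` d" unfolding shortv_def act_def by blast
  have "g ` d = g ` {predn n v, sucn n v}" using d(2) dih_ps[OF assms(1) v(1) n0] v(2) by simp
  moreover have "d \<subseteq> {..<n}" using d(1) assms(3) diag_sub by blast
  moreover have "{predn n v, sucn n v} \<subseteq> {..<n}" using predn_lt sucn_lt n0 by auto
  ultimately have "d = {predn n v, sucn n v}" using inj_on_image_eq_iff[OF bij(1)] by blast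
  then show "u \<in> g ` shortv n T" unfolding shortv_def using d(1) v by blast
next
  have n0: "0 < n" using assms by simp
  fix u assume "u \<in> g ` shortv n T"
  then obtain v where v: "v < n" "{predn n v, sucn n v} \<in> T" "u = g v" unfolding shortv_def by blast
  have "g ` {predn n v, sucn n v} \<in> act g T" unfolding act_def using v(2) by blast
  then have "{predn n u, sucn n u} \<in> act g T" using dih_ps[OF assms(1) v(1) n0] v(3) by simp
  then show "u \<in> shortv n (act g T)" unfolding shortv_def using dih_lt[OF assms(1) n0] v(3) by simp
qed

lemma tS_img: "tS n S = (\<lambda>k. {aS n S k, aS n S k + k + 1}) ` {1..n-3}"
  unfolding tS_def by auto

definition Cset :: "nat \<Rightarrow> nat set \<Rightarrow> nat set" where "Cset n S = {1..<n-3} - S"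
definition Rset :: "nat \<Rightarrow> nat set \<Rightarrow> nat set" where "Rset n S = (\<lambda>s. n - 3 - s) ` S"

lemma aS_C: assumes "1 \<le> k" "k \<le> n - 3" shows "aS n (Cset n S) k + aS n S k + k + 1 = n"
  using assms(2,1)
proof (induction k rule: inc_induct)
  case base then show ?case using aS_top[of n] by simp
next
  case (step k)
  have "aS n (Cset n S) k = (if k \<in> Cset n S then 1 else 0) + aS n (Cset n S) (k+1)" using aS_rec step.hyps(2) by blast
  moreover have "aS n S k = (if k \<in> S then 1 else 0) + aS n S (k+1)" using aS_rec step.hyps(2) by blast
  moreover have "k \<in> Cset n S \<longleftrightarrow> k \<notin> S" unfolding Cset_def using step by auto
  ultimately show ?case using step.IH step.prems by auto
qed

lemma act_refl0: assumes n4: "4 \<le> n" shows "act (rfl n 0) (tS n S) = tS n (Cset n S)"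
proof -
  have "act (rfl n 0) (tS n S) = (\<lambda>k. rfl n 0 ` {aS n S k, aS n S k + k + 1}) ` {1..n-3}"
    unfolding act_def tS_img image_image ..
  also have "\<dots> = (\<lambda>k. {aS n (Cset n S) k, aS n (Cset n S) k + k + 1}) ` {1..n-3}"
  proof (rule image_cong[OF refl])
    fix k assume k: "k \<in> {1..n-3}"
    have c: "aS n (Cset n S) k + aS n S k + k + 1 = n" using aS_C k by auto
    have b: "aS n S k + k + 1 \<le> n - 1" "1 \<le> aS n S k" using aS_bound[of k n S] aS_ge1 k by auto
    have "rfl n 0 (aS n S k) = n - aS n S k" unfolding rfl_def using b by simp
    moreover have "rfl n 0 (aS n S k + k + 1) = n - (aS n S k + k + 1)" unfolding rfl_def using b by simp
    ultimately show "rfl n 0 ` {aS n S k, aS n S k + k + 1} = {aS n (Cset n S) k, aS n (Cset n S) k + k + 1}"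
      using c by auto
  qed
  also have "\<dots> = tS n (Cset n S)" unfolding tS_img ..
  finally show ?thesis .
qed

lemma aS_RC: assumes "1 \<le> k" "k \<le> n - 3"
  shows "aS n (Rset n (Cset n S)) k + aS n S 1 = aS n S (n-2-k) + (n-2-k)"
  using assms(2,1)
proof (induction k rule: inc_induct)
  case base
  then have "n - 2 - (n - 3) = 1" by simp
  then show ?case using aS_top[of n] by simp
next
  case (step k)
  let ?R = "Rset n (Cset n S)"
  define j where "j = n - 2 - k"
  have j: "2 \<le> j" "j - 1 = n - 2 - (k+1)" "j - 1 < n - 3" "1 \<le> j - 1" using step unfolding j_def by auto
  have r1: "aS n ?R k = (if k \<in> ?R then 1 else 0) + aS n ?R (k+1)" using aS_rec step.hyps(2) by blast
  have r2: "aS n S (j-1) = (if j - 1 \<in> S then 1 else 0) + aS n S j"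
    using aS_rec[OF j(3)] j(1) by simp
  have "k \<in> ?R \<longleftrightarrow> j - 1 \<notin> S"
  proof
    assume "k \<in> ?R"
    then obtain s where s: "s \<in> {1..<n-3}" "s \<notin> S" "k = n - 3 - s" unfolding Rset_def Cset_def by blast
    have "j - 1 = s" unfolding j_def using s(1,3) by auto
    then have "s = j - 1" by simp
    then show "j - 1 \<notin> S" using s by simp
  next
    assume "j - 1 \<notin> S"
    moreover have "j - 1 \<in> {1..<n-3}" using j by auto
    moreover have "k = n - 3 - (j - 1)" using step j unfolding j_def by auto
    ultimately show "k \<in> ?R" unfolding Rset_def Cset_def by blast
  qed
  moreover have IH: "aS n ?R (k+1) + aS n S 1 = aS n S (j-1) + (j-1)" using step.IH step.prems j(2) by simp
  ultimately show ?case using r1 r2 j(1) unfolding j_def[symmetric] by auto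
qed

lemma act_rotw: assumes n4: "4 \<le> n"
  shows "act (rot n (n - (aS n S 1 + 1))) (tS n S) = tS n (Rset n (Cset n S))"
proof -
  let ?w = "aS n S 1 + 1" and ?R = "Rset n (Cset n S)"
  let ?r = "rot n (n - ?w)"
  have w: "?w + 1 \<le> n - 1" using aS_bound[of 1 n S] n4 by simp
  have "act ?r (tS n S) = (\<lambda>j. ?r ` {aS n S j, aS n S j + j + 1}) ` {1..n-3}"
    unfolding act_def tS_img image_image ..
  also have "\<dots> = (\<lambda>j. {aS n ?R (n-2-j), aS n ?R (n-2-j) + (n-2-j) + 1}) ` {1..n-3}"
  proof (rule image_cong[OF refl])
    fix j assume j: "j \<in> {1..n-3}"
    have kj: "1 \<le> n-2-j" "n-2-j \<le> n - 3" "n - 2 - (n-2-j) = j" using j by auto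
    have e: "aS n ?R (n-2-j) + aS n S 1 = aS n S j + j" using aS_RC[OF kj(1,2), of S] kj(3) by simp
    have m: "aS n S j \<le> aS n S 1" "aS n S 1 + 1 + 1 \<le> aS n S j + j + 1" using tS_chain[of 1 j n S] j by auto
    have b: "aS n S j + j + 1 \<le> n - 1" using aS_bound[of j n S] j by auto
    have "?r (aS n S j) = aS n S j + (n - ?w)" unfolding rot_def using m w by simp
    moreover have "?r (aS n S j + j + 1) = aS n S j + j + 1 - ?w"
    proof -
      have "aS n S j + j + 1 + (n - ?w) = (aS n S j + j + 1 - ?w) + n" using m w by simp
      moreover have "aS n S j + j + 1 - ?w < n" using b by simp
      ultimately show ?thesis unfolding rot_def by simp
    qed
    moreover have "aS n ?R (n-2-j) = aS n S j + j + 1 - ?w" using e m by simp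
    moreover have "aS n ?R (n-2-j) + (n-2-j) + 1 = aS n S j + (n - ?w)" using e m j w by simp
    ultimately show "?r ` {aS n S j, aS n S j + j + 1} = {aS n ?R (n-2-j), aS n ?R (n-2-j) + (n-2-j) + 1}"
      by auto
  qed
  also have "\<dots> = (\<lambda>k. {aS n ?R k, aS n ?R k + k + 1}) ` ((\<lambda>j. n-2-j) ` {1..n-3})"
    by (simp add: image_image)
  also have "(\<lambda>j. n-2-j) ` {1..n-3} = {1..n-3}"
  proof (intro equalityI subsetI)
    fix x assume "x \<in> (\<lambda>j. n-2-j) ` {1..n-3}" then show "x \<in> {1..n-3}" by auto
  next
    fix x assume x: "x \<in> {1..n-3}"
    then have "x = n - 2 - (n - 2 - x)" "n - 2 - x \<in> {1..n-3}" by auto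
    then show "x \<in> (\<lambda>j. n-2-j) ` {1..n-3}" by blast
  qed
  finally show ?thesis unfolding tS_img .
qed

lemma tS_aS_eq: assumes "tS n S = tS n S'" "1 \<le> k" "k \<le> n - 3" shows "aS n S k = aS n S' k"
proof -
  have "{aS n S k, aS n S k + k + 1} \<in> tS n S" by (rule tS_in[OF assms(2,3)])
  then have "{aS n S k, aS n S k + k + 1} \<in> tS n S'" using assms(1) by simp
  then obtain j where j: "1 \<le> j" "j \<le> n - 3" "{aS n S k, aS n S k + k + 1} = {aS n S' j, aS n S' j + j + 1}"
    unfolding tS_mem by blast
  have "aS n S k < aS n S k + k + 1" "aS n S' j < aS n S' j + j + 1" by simp_all
  from doubleton_ord[OF j(3) this] have "aS n S k = aS n S' j" "j = k" by auto
  then show ?thesis by simp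
qed

lemma tS_inj: assumes "S \<subseteq> {1..<n-3}" "S' \<subseteq> {1..<n-3}" "tS n S = tS n S'" shows "S = S'"
proof -
  have "\<And>k. k \<in> {1..<n-3} \<Longrightarrow> k \<in> S \<longleftrightarrow> k \<in> S'"
  proof -
    fix k assume k: "k \<in> {1..<n-3}"
    have "aS n S k = aS n S' k" "aS n S (k+1) = aS n S' (k+1)" using tS_aS_eq[OF assms(3)] k by auto
    moreover have "aS n S k = (if k \<in> S then 1 else 0) + aS n S (k+1)" using aS_rec k by auto
    moreover have "aS n S' k = (if k \<in> S' then 1 else 0) + aS n S' (k+1)" using aS_rec k by auto
    ultimately show "k \<in> S \<longleftrightarrow> k \<in> S'" by (auto split: if_splits)
  qed
  then show ?thesis using assms(1,2) by blast
qed

lemma rel_img: assumes "T \<in> two_eared_triangulations n"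
  shows "symmetry_rel n `` {T} = {act g T | g. g \<in> dihedral n}"
  unfolding symmetry_rel_def using assms by blast

lemma te_diag: "T \<in> two_eared_triangulations n \<Longrightarrow> T \<subseteq> diagonals n"
  unfolding two_eared_triangulations_def triangulation_def by blast

lemma act_id: assumes "T \<subseteq> diagonals n" "\<forall>i<n. g i = i" shows "act g T = T"
proof -
  have "act g T = act (\<lambda>i. i) T" by (rule act_cong[of T n]) (use assms diag_sub in blast)+
  then show ?thesis unfolding act_def by simp
qed

lemma act_comp_cong: assumes "T \<subseteq> diagonals n" "\<forall>i<n. g (h i) = c i"
  shows "act g (act h T) = act c T"
proof -
  have "\<And>d. d \<in> T \<Longrightarrow> d \<subseteq> {..<n}" using assms(1) diag_sub by blast
  moreover have "\<And>i. i < n \<Longrightarrow> (g \<circ> h) i = c i" using assms(2) by simp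
  ultimately show ?thesis unfolding act_act by (rule act_cong)
qed

lemma orb_act: assumes n4: "4 \<le> n" and T: "T \<in> two_eared_triangulations n" and h: "h \<in> dihedral n"
  and hT: "act h T \<in> two_eared_triangulations n"
  shows "symmetry_rel n `` {act h T} = symmetry_rel n `` {T}"
proof -
  have n0: "0 < n" using n4 by simp
  have TD: "T \<subseteq> diagonals n" "act h T \<subseteq> diagonals n" using te_diag T hT by blast+
  obtain hi where hi: "hi \<in> dihedral n" "\<forall>i<n. hi (h i) = i" using dih_inv[OF h n0] by blast
  have hback: "act hi (act h T) = T"
  proof -
    have "act hi (act h T) = act (\<lambda>i. i) T" by (rule act_comp_cong[OF TD(1)]) (use hi in simp)
    also have "\<dots> = T" by (rule act_id[OF TD(1)]) simp
    finally show ?thesis .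
  qed
  show ?thesis unfolding rel_img[OF T] rel_img[OF hT]
  proof (intro equalityI subsetI)
    fix X assume "X \<in> {act g (act h T) | g. g \<in> dihedral n}"
    then obtain g where g: "g \<in> dihedral n" "X = act g (act h T)" by blast
    obtain c where c: "c \<in> dihedral n" "\<forall>i<n. g (h i) = c i" using dih_comp[OF g(1) h n0] by blast
    have "X = act c T" using g(2) act_comp_cong[of T n g h c, OF TD(1) c(2)] by simp
    then show "X \<in> {act g T | g. g \<in> dihedral n}" using c(1) by blast
  next
    fix X assume "X \<in> {act g T | g. g \<in> dihedral n}"
    then obtain g where g: "g \<in> dihedral n" "X = act g T" by blast
    obtain c where c: "c \<in> dihedral n" "\<forall>i<n. g (hi i) = c i" using dih_comp[OF g(1) hi(1) n0] by blast
    have "X = act g (act hi (act h T))" using g(2) hback by simp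
    also have "\<dots> = act c (act h T)" by (rule act_comp_cong[of "act h T" n g hi c, OF TD(2) c(2)])
    finally show "X \<in> {act g (act h T) | g. g \<in> dihedral n}" using c(1) by blast
  qed
qed

definition orbS :: "nat \<Rightarrow> nat set \<Rightarrow> nat set set" where
  "orbS n S = {S, Cset n S, Rset n S, Cset n (Rset n S)}"

lemma C_sub: "Cset n S \<subseteq> {1..<n-3}" unfolding Cset_def by auto
lemma R_sub: assumes "S \<subseteq> {1..<n-3}" shows "Rset n S \<subseteq> {1..<n-3}"
proof
  fix x assume "x \<in> Rset n S"
  then obtain s where s: "s \<in> S" "x = n - 3 - s" unfolding Rset_def by blast
  then have "1 \<le> s" "s < n - 3" using assms by auto
  then show "x \<in> {1..<n-3}" using s(2) by auto
qed
lemma CC: "S \<subseteq> {1..<n-3} \<Longrightarrow> Cset n (Cset n S) = S" unfolding Cset_def by auto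
lemma RR: assumes "S \<subseteq> {1..<n-3}" shows "Rset n (Rset n S) = S"
proof -
  have "\<And>s. s \<in> S \<Longrightarrow> n - 3 - (n - 3 - s) = s"
  proof -
    fix s assume "s \<in> S" then have "s < n - 3" using assms by auto
    then show "n - 3 - (n - 3 - s) = s" by simp
  qed
  then show ?thesis unfolding Rset_def image_image by simp
qed
lemma CR: assumes "S \<subseteq> {1..<n-3}" shows "Cset n (Rset n S) = Rset n (Cset n S)"
proof (intro equalityI subsetI)
  fix x assume x: "x \<in> Cset n (Rset n S)"
  then have x1: "x \<in> {1..<n-3}" "x \<notin> (\<lambda>s. n - 3 - s) ` S" unfolding Cset_def Rset_def by auto
  then have "1 \<le> x" "x < n - 3" by auto
  then have "n - 3 - x \<in> {1..<n-3}" "x = n - 3 - (n - 3 - x)" by auto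
  with x1 have "n - 3 - x \<in> Cset n S" "x = n - 3 - (n - 3 - x)" unfolding Cset_def by (auto simp: image_iff)
  then show "x \<in> Rset n (Cset n S)" unfolding Rset_def by blast
next
  fix x assume "x \<in> Rset n (Cset n S)"
  then obtain s where s: "s \<in> {1..<n-3}" "s \<notin> S" "x = n - 3 - s" unfolding Rset_def Cset_def by auto
  have "x \<in> {1..<n-3}" using s by auto
  moreover have "x \<notin> (\<lambda>s. n - 3 - s) ` S"
  proof
    assume "x \<in> (\<lambda>s. n - 3 - s) ` S"
    then obtain t where "t \<in> S" "x = n - 3 - t" by blast
    then have "t = s" using s assms by auto
    then show False using s \<open>t \<in> S\<close> by simp
  qed
  ultimately show "x \<in> Cset n (Rset n S)" unfolding Cset_def Rset_def by blast
qed

lemma rho_dih: assumes "1 \<le> w" "w < n" shows "rot n (n - w) \<in> dihedral n"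
  unfolding dihedral_alt using assms by auto

lemma orbit_iff:
  assumes n4: "4 \<le> n" and S: "S \<subseteq> {1..<n-3}" and S': "S' \<subseteq> {1..<n-3}"
  shows "symmetry_rel n `` {tS n S} = symmetry_rel n `` {tS n S'} \<longleftrightarrow> S' \<in> orbS n S"
proof
  have n0: "0 < n" using n4 by simp
  have n31: "1 \<le> n - 3" using n4 by simp
  have ww: "\<And>X. 1 \<le> aS n X 1 + 1" "\<And>X. aS n X 1 + 1 < n"
  proof -
    fix X show "1 \<le> aS n X 1 + 1" by simp
    have "aS n X 1 + 1 + 1 \<le> n - 1" by (rule aS_bound[OF n31 order_refl])
    then show "aS n X 1 + 1 < n" by simp
  qed
  have refl0: "rfl n 0 \<in> dihedral n" unfolding dihedral_alt using n0 by auto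
  have key: "\<And>X. X \<subseteq> {1..<n-3} \<Longrightarrow> symmetry_rel n `` {tS n (Cset n X)} = symmetry_rel n `` {tS n X}"
    using orb_act[OF n4 tS_two[OF n4] refl0] tS_two[OF n4] act_refl0[OF n4] by metis
  have key2: "\<And>X. X \<subseteq> {1..<n-3} \<Longrightarrow> symmetry_rel n `` {tS n (Rset n (Cset n X))} = symmetry_rel n `` {tS n X}"
  proof -
    fix X :: "nat set"
    have "symmetry_rel n `` {act (rot n (n - (aS n X 1 + 1))) (tS n X)} = symmetry_rel n `` {tS n X}"
      by (rule orb_act[OF n4 tS_two[OF n4] rho_dih[OF ww]]) (use act_rotw[OF n4] tS_two[OF n4] in simp)
    then show "symmetry_rel n `` {tS n (Rset n (Cset n X))} = symmetry_rel n `` {tS n X}"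
      using act_rotw[OF n4] by simp
  qed
  {
    assume "S' \<in> orbS n S"
    then consider "S' = S" | "S' = Cset n S" | "S' = Rset n S" | "S' = Cset n (Rset n S)" unfolding orbS_def by blast
    then show "symmetry_rel n `` {tS n S} = symmetry_rel n `` {tS n S'}"
    proof cases
      case 1 then show ?thesis by simp
    next
      case 2 then show ?thesis using key[OF S] by simp
    next
      case 3
      have "Rset n S = Rset n (Cset n (Cset n S))" using CC[OF S] by simp
      then have "symmetry_rel n `` {tS n S'} = symmetry_rel n `` {tS n (Cset n S)}"
        using 3 key2[OF C_sub] by simp
      then show ?thesis using key[OF S] by simp
    next
      case 4 then show ?thesis using key2[OF S] CR[OF S] by simp
    qed
  }
  assume eq: "symmetry_rel n `` {tS n S} = symmetry_rel n `` {tS n S'}"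
  have "tS n S' \<in> symmetry_rel n `` {tS n S'}" unfolding rel_img[OF tS_two[OF n4]]
  proof -
    have "rot n 0 \<in> dihedral n" unfolding dihedral_alt using n0 by auto
    moreover have "act (rot n 0) (tS n S') = tS n S'" by (rule act_id[OF tS_diag[OF n4]]) (simp add: rot_def)
    ultimately show "tS n S' \<in> {act g (tS n S') | g. g \<in> dihedral n}" by force
  qed
  then have "tS n S' \<in> symmetry_rel n `` {tS n S}" using eq by simp
  then obtain h where h: "h \<in> dihedral n" "tS n S' = act h (tS n S)"
    unfolding rel_img[OF tS_two[OF n4]] by blast
  let ?w = "aS n S 1 + 1" and ?w' = "aS n S' 1 + 1"
  have "shortv n (tS n S') = h ` shortv n (tS n S)" using h act_short[OF h(1) n4 tS_diag[OF n4]] by simp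
  then have "h 0 \<in> {0, ?w'}" unfolding tS_short[OF n4] by auto
  then consider "h 0 = 0" | "h 0 = ?w'" by auto
  then show "S' \<in> orbS n S"
  proof cases
    case 1
    from dih_fix0[OF h(1) 1 n0] show ?thesis
    proof
      assume "\<forall>i<n. h i = i"
      then have "tS n S' = tS n S" using h(2) act_id[OF tS_diag[OF n4]] by simp
      then show ?thesis using tS_inj[OF S S'] unfolding orbS_def by simp
    next
      assume "\<forall>i<n. h i = rfl n 0 i"
      then have "act h (tS n S) = act (rfl n 0) (tS n S)"
        by (intro act_cong[of _ n]) (use tS_diag[OF n4] diag_sub in blast)+
      then have "tS n S' = tS n (Cset n S)" using h(2) act_refl0[OF n4] by simp
      then show ?thesis using tS_inj[OF C_sub S'] unfolding orbS_def by simp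
    qed
  next
    case 2
    let ?r = "rot n (n - ?w')"
    have rd: "?r \<in> dihedral n" by (rule rho_dih[OF ww])
    obtain c where c: "c \<in> dihedral n" "\<forall>i<n. ?r (h i) = c i" using dih_comp[OF rd h(1) n0] by blast
    have c0: "c 0 = 0"
    proof -
      have "c 0 = ?r ?w'" using c(2) n0 2 by metis
      also have "\<dots> = 0" unfolding rot_def using ww[of S'] by simp
      finally show ?thesis .
    qed
    have "tS n (Rset n (Cset n S')) = act ?r (tS n S')" using act_rotw[OF n4] by simp
    also have "\<dots> = act c (tS n S)" unfolding h(2) by (rule act_comp_cong[of "tS n S" n ?r h c, OF tS_diag[OF n4] c(2)])
    finally have E: "tS n (Rset n (Cset n S')) = act c (tS n S)" .
    have RCsub: "Rset n (Cset n S') \<subseteq> {1..<n-3}" by (rule R_sub[OF C_sub])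
    have inv: "Cset n (Rset n (Rset n (Cset n S'))) = S'" using RR[OF C_sub] CC[OF S'] by simp
    from dih_fix0[OF c(1) c0 n0] show ?thesis
    proof
      assume "\<forall>i<n. c i = i"
      then have "tS n (Rset n (Cset n S')) = tS n S" using E act_id[OF tS_diag[OF n4]] by simp
      then have "Rset n (Cset n S') = S" using tS_inj[OF RCsub S] by simp
      then have "S' = Cset n (Rset n S)" using inv by simp
      then show ?thesis unfolding orbS_def by simp
    next
      assume "\<forall>i<n. c i = rfl n 0 i"
      then have "act c (tS n S) = act (rfl n 0) (tS n S)"
        by (intro act_cong[of _ n]) (use tS_diag[OF n4] diag_sub in blast)+
      then have "tS n (Rset n (Cset n S')) = tS n (Cset n S)" using E act_refl0[OF n4] by simp
      then have "Rset n (Cset n S') = Cset n S" using tS_inj[OF RCsub C_sub] by simp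
      then have "S' = Cset n (Rset n (Cset n S))" using inv by simp
      also have "\<dots> = Rset n S" using CR[OF C_sub] CC[OF S] by simp
      finally show ?thesis unfolding orbS_def by simp
    qed
  qed
qed

definition psum :: "nat list \<Rightarrow> nat \<Rightarrow> nat" where "psum xs i = sum_list (take i xs)"

lemma comp_gaps_psum: "comp_gaps xs = psum xs ` {1..<length xs}"
  unfolding comp_gaps_def psum_def by auto

lemma psum_Suc: "i < length xs \<Longrightarrow> psum xs (Suc i) = psum xs i + xs ! i"
  unfolding psum_def by (simp add: take_Suc_conv_app_nth)

lemma psum_0: "psum xs 0 = 0" unfolding psum_def by simp
lemma psum_len: "psum xs (length xs) = sum_list xs" unfolding psum_def by simp

lemma psum_mono: assumes "\<forall>x\<in>set xs. 0 < x" "i < j" "j \<le> length xs" shows "psum xs i < psum xs j"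
  using assms(2,3)
proof (induction j)
  case 0 then show ?case by simp
next
  case (Suc j)
  have pos: "0 < xs ! j" using assms(1) Suc.prems by auto
  have e: "psum xs (Suc j) = psum xs j + xs ! j" using psum_Suc Suc.prems by simp
  show ?case
  proof (cases "i = j")
    case True then show ?thesis using e pos by simp
  next
    case False then have "i < j" using Suc.prems by simp
    then show ?thesis using Suc.IH Suc.prems e by simp
  qed
qed

lemma gaps_sub: assumes "xs \<in> compositions m" shows "comp_gaps xs \<subseteq> {1..<m}"
proof
  fix s assume "s \<in> comp_gaps xs"
  then obtain i where i0: "i \<in> {1..<length xs}" "s = psum xs i" unfolding comp_gaps_psum by blast
  then have i: "0 < i" "i < length xs" "s = psum xs i" by auto
  have pos: "\<forall>x\<in>set xs. 0 < x" "sum_list xs = m" using assms unfolding compositions_def by auto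
  have "psum xs 0 < psum xs i" "psum xs i < psum xs (length xs)" using psum_mono[OF pos(1)] i by auto
  then show "s \<in> {1..<m}" using i(3) psum_0 psum_len pos(2) by auto
qed

lemma gaps_comp_inv: assumes "xs \<in> compositions m" "1 \<le> m" shows "gaps_comp m (comp_gaps xs) = xs"
proof -
  have pos: "\<forall>x\<in>set xs. 0 < x" and sm: "sum_list xs = m" using assms unfolding compositions_def by auto
  let ?L = "length xs"
  show ?thesis
  proof (cases "xs = []")
    case True
    then have "m = 0" using sm by simp
    then show ?thesis using assms(2) by simp
  next
    case False
    then have L1: "1 \<le> ?L" by (simp add: Suc_leI)
    have sw: "sorted_wrt (<) (map (psum xs) [1..<?L])"
      unfolding sorted_wrt_map
      by (rule sorted_wrt_mono_rel[OF _ sorted_wrt_upt]) (use psum_mono[OF pos] in auto)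
    have sl: "sorted_list_of_set (comp_gaps xs) = map (psum xs) [1..<?L]"
    proof -
      have "comp_gaps xs = set (map (psum xs) [1..<?L])" unfolding comp_gaps_psum by simp
      moreover have "sorted (map (psum xs) [1..<?L])" "distinct (map (psum xs) [1..<?L])"
        using sw strict_sorted_iff by blast+
      moreover have "sorted_list_of_set (set (map (psum xs) [1..<?L])) = map (psum xs) [1..<?L]"
        unfolding sorted_list_of_set_sort_remdups using calculation(2,3) by (simp add: distinct_remdups_id sorted_sort_id)
      ultimately show ?thesis by simp
    qed
    have ups: "[0..<?L+1] = 0 # [1..<?L] @ [?L]" using L1
      by (metis Suc_eq_plus1 add_0 upt_Suc_append upt_conv_Cons zero_less_Suc le_add_diff_inverse2 less_one not_less)
    have ps: "0 # sorted_list_of_set (comp_gaps xs) @ [m] = map (psum xs) [0..<?L+1]"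
      unfolding sl ups using psum_0 psum_len sm by simp
    show ?thesis unfolding gaps_comp_def Let_def ps
    proof (rule nth_equalityI)
      show "length (map (\<lambda>i. map (psum xs) [0..<?L+1] ! (i + 1) - map (psum xs) [0..<?L+1] ! i)
          [0..<length (map (psum xs) [0..<?L+1]) - 1]) = length xs" by simp
      fix i assume "i < length (map (\<lambda>i. map (psum xs) [0..<?L+1] ! (i + 1) - map (psum xs) [0..<?L+1] ! i)
          [0..<length (map (psum xs) [0..<?L+1]) - 1])"
      then have i: "i < ?L" by simp
      have "map (psum xs) [0..<?L+1] ! (i + 1) = psum xs (i+1)" using i by (simp del: upt_Suc)
      moreover have "map (psum xs) [0..<?L+1] ! i = psum xs i" using i by (simp del: upt_Suc)
      ultimately show "map (\<lambda>i. map (psum xs) [0..<?L+1] ! (i + 1) - map (psum xs) [0..<?L+1] ! i)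
          [0..<length (map (psum xs) [0..<?L+1]) - 1] ! i = xs ! i"
        using i psum_Suc[OF i] by simp
    qed
  qed
qed

lemma gaps_inj: "1 \<le> m \<Longrightarrow> xs \<in> compositions m \<Longrightarrow> ys \<in> compositions m \<Longrightarrow> comp_gaps xs = comp_gaps ys \<Longrightarrow> xs = ys"
  using gaps_comp_inv by metis

lemma CG_cons: "comp_gaps (x # xs) = (if xs = [] then {} else insert x ((+) x ` comp_gaps xs))"
proof (cases "xs = []")
  case True then show ?thesis unfolding comp_gaps_def by simp
next
  case False
  have "comp_gaps (x # xs) = psum (x#xs) ` {1..<Suc (length xs)}" unfolding comp_gaps_psum by simp
  also have "\<dots> = psum (x#xs) ` (Suc ` {0..<length xs})" by (simp add: image_Suc_atLeastLessThan)
  also have "\<dots> = (\<lambda>j. x + psum xs j) ` {0..<length xs}" unfolding image_image psum_def by simp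
  also have "{0..<length xs} = insert 0 {1..<length xs}" using False by auto
  also have "(\<lambda>j. x + psum xs j) ` insert 0 {1..<length xs} = insert x ((+) x ` comp_gaps xs)"
    unfolding comp_gaps_psum image_image by (simp add: psum_0)
  finally show ?thesis using False by simp
qed

lemma gaps_surj: "1 \<le> m \<Longrightarrow> S \<subseteq> {1..<m} \<Longrightarrow> \<exists>xs \<in> compositions m. comp_gaps xs = S"
proof (induction m arbitrary: S rule: less_induct)
  case (less m)
  show ?case
  proof (cases "S = {}")
    case True
    have "[m] \<in> compositions m" unfolding compositions_def using less.prems by simp
    moreover have "comp_gaps [m] = {}" unfolding comp_gaps_def by simp
    ultimately show ?thesis using True by blast
  next
    case False
    have fin: "finite S" using less.prems finite_subset by blast
    define x where "x = Min S"
    have x: "x \<in> S" "\<And>s. s \<in> S \<Longrightarrow> x \<le> s" unfolding x_def using fin False by auto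
    have xb: "1 \<le> x" "x < m" using x less.prems by auto
    define S' where "S' = (\<lambda>s. s - x) ` (S - {x})"
    have S'sub: "S' \<subseteq> {1..<m - x}"
    proof
      fix t assume "t \<in> S'"
      then obtain s where s: "s \<in> S" "s \<noteq> x" "t = s - x" unfolding S'_def by blast
      then have "x < s" "s < m" using x(2)[OF s(1)] less.prems by auto
      then show "t \<in> {1..<m - x}" using s(3) by auto
    qed
    obtain ys where ys: "ys \<in> compositions (m - x)" "comp_gaps ys = S'"
    proof -
    have "1 \<le> m - x" "m - x < m" using xb by auto
    then show ?thesis using less.IH[of "m - x" S'] S'sub that by blast
  qed
    have ysne: "ys \<noteq> []" using ys(1) xb unfolding compositions_def by auto
    have "x # ys \<in> compositions m" using ys(1) xb unfolding compositions_def by auto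
    moreover have "comp_gaps (x # ys) = S"
    proof -
      have "(+) x ` S' = S - {x}"
      proof -
        have "\<And>s. s \<in> S - {x} \<Longrightarrow> x + (s - x) = s" using x by force
        then show ?thesis unfolding S'_def image_image by simp
      qed
      then show ?thesis unfolding CG_cons using ysne ys(2) x(1) by auto
    qed
    ultimately show ?thesis by blast
  qed
qed

lemma rev_comp: "xs \<in> compositions m \<Longrightarrow> rev xs \<in> compositions m"
  unfolding compositions_def by (simp add: sum_list_rev)

lemma gaps_rev: assumes "xs \<in> compositions m" shows "comp_gaps (rev xs) = (\<lambda>s. m - s) ` comp_gaps xs"
proof -
  have sm: "sum_list xs = m" using assms unfolding compositions_def by auto
  let ?L = "length xs"
  have ps: "\<And>i. i \<le> ?L \<Longrightarrow> psum (rev xs) i = m - psum xs (?L - i)"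
  proof -
    fix i assume i: "i \<le> ?L"
    have "psum (rev xs) i = sum_list (drop (?L - i) xs)" unfolding psum_def by (simp add: take_rev sum_list_rev)
    moreover have "psum xs (?L - i) + sum_list (drop (?L - i) xs) = m"
      unfolding psum_def using sm by (metis append_take_drop_id sum_list_append)
    ultimately show "psum (rev xs) i = m - psum xs (?L - i)" by simp
  qed
  have "comp_gaps (rev xs) = (\<lambda>i. m - psum xs (?L - i)) ` {1..<?L}"
    unfolding comp_gaps_psum length_rev using ps by (intro image_cong) auto
  also have "\<dots> = (\<lambda>s. m - s) ` (psum xs ` ((\<lambda>i. ?L - i) ` {1..<?L}))" by (simp add: image_image)
  also have "(\<lambda>i. ?L - i) ` {1..<?L} = {1..<?L}"
  proof (intro equalityI subsetI)
    fix j assume "j \<in> (\<lambda>i. ?L - i) ` {1..<?L}" then show "j \<in> {1..<?L}" by auto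
  next
    fix j assume j: "j \<in> {1..<?L}"
    then have "j = ?L - (?L - j)" "?L - j \<in> {1..<?L}" by auto
    then show "j \<in> (\<lambda>i. ?L - i) ` {1..<?L}" by blast
  qed
  finally show ?thesis unfolding comp_gaps_psum .
qed

lemma conj_props: assumes "xs \<in> compositions m" "1 \<le> m"
  shows "conjugate m xs \<in> compositions m" "comp_gaps (conjugate m xs) = {1..<m} - comp_gaps xs"
proof -
  obtain ys where ys: "ys \<in> compositions m" "comp_gaps ys = {1..<m} - comp_gaps xs"
    using gaps_surj[OF assms(2), of "{1..<m} - comp_gaps xs"] by auto
  have "conjugate m xs = ys" unfolding conjugate_def ys(2)[symmetric] by (rule gaps_comp_inv[OF ys(1) assms(2)])
  then show "conjugate m xs \<in> compositions m" "comp_gaps (conjugate m xs) = {1..<m} - comp_gaps xs"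
    using ys by auto
qed

lemma equiv_ce: "equiv UNIV (comp_equiv m)"
  unfolding comp_equiv_def equiv_def
  by (intro conjI) (simp_all add: refl_rtrancl sym_rtrancl[OF sym_Un_converse] trans_rtrancl)

lemma ce_class_iff: "comp_equiv m `` {x} = comp_equiv m `` {y} \<longleftrightarrow> (x, y) \<in> comp_equiv m"
  using eq_equiv_class_iff[OF equiv_ce] by blast

lemma orbS_closed: assumes G: "G \<subseteq> {1..<n-3}" and X: "X \<in> orbS n G"
  shows "Cset n X \<in> orbS n G \<and> Rset n X \<in> orbS n G"
proof -
  have RG: "Rset n G \<subseteq> {1..<n-3}" by (rule R_sub[OF G])
  from X consider "X = G" | "X = Cset n G" | "X = Rset n G" | "X = Cset n (Rset n G)" unfolding orbS_def by blast
  then show ?thesis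
  proof cases
    case 1 then show ?thesis unfolding orbS_def by auto
  next
    case 2 then show ?thesis unfolding orbS_def using CC[OF G] CR[OF G] by auto
  next
    case 3 then show ?thesis unfolding orbS_def using RR[OF G] by auto
  next
    case 4
    have "Rset n (Cset n (Rset n G)) = Cset n G" using CR[OF RG] RR[OF G] by simp
    then show ?thesis unfolding orbS_def using 4 CC[OF RG] by auto
  qed
qed

lemma orbS_self: "G \<in> orbS n G" unfolding orbS_def by simp

lemma step_gaps: assumes n4: "4 \<le> n" and st: "(y, z) \<in> comp_step (n-3)"
  shows "y \<in> compositions (n-3) \<and> z \<in> compositions (n-3) \<and>
    (comp_gaps z = Cset n (comp_gaps y) \<or> comp_gaps z = Rset n (comp_gaps y))"
proof -
  have m1: "1 \<le> n - 3" using n4 by simp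
  from st consider "y \<in> compositions (n-3)" "z = conjugate (n-3) y" | "y \<in> compositions (n-3)" "z = rev y"
    unfolding comp_step_def by blast
  then show ?thesis
  proof cases
    case 1
    then show ?thesis using conj_props[OF 1(1) m1] unfolding Cset_def by auto
  next
    case 2
    then show ?thesis using rev_comp[OF 2(1)] gaps_rev[OF 2(1)] unfolding Rset_def by auto
  qed
qed

lemma ce_inv: assumes n4: "4 \<le> n" and r: "(xs, ys) \<in> comp_equiv (n-3)" and xs: "xs \<in> compositions (n-3)"
  shows "ys \<in> compositions (n-3) \<and> comp_gaps ys \<in> orbS n (comp_gaps xs)"
  using r unfolding comp_equiv_def
proof (induction rule: rtrancl_induct)
  case base then show ?case using xs orbS_self by blast
next
  case (step y z)
  have G: "comp_gaps xs \<subseteq> {1..<n-3}" by (rule gaps_sub[OF xs])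
  have Y: "comp_gaps y \<in> orbS n (comp_gaps xs)" using step.IH by blast
  from step.hyps(2) show ?case
  proof
    assume st: "(y, z) \<in> comp_step (n-3)"
    show ?thesis using step_gaps[OF n4 st] orbS_closed[OF G Y] by auto
  next
    assume "(y, z) \<in> (comp_step (n-3))\<inverse>"
    then have st: "(z, y) \<in> comp_step (n-3)" by simp
    have sg: "z \<in> compositions (n-3)" "comp_gaps y = Cset n (comp_gaps z) \<or> comp_gaps y = Rset n (comp_gaps z)"
      using step_gaps[OF n4 st] by auto
    have Z: "comp_gaps z \<subseteq> {1..<n-3}" by (rule gaps_sub[OF sg(1)])
    have "comp_gaps z = Cset n (comp_gaps y) \<or> comp_gaps z = Rset n (comp_gaps y)"
      using sg(2) CC[OF Z] RR[OF Z] by auto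
    then show ?thesis using sg(1) orbS_closed[OF G Y] by auto
  qed
qed

lemma ce_of: assumes n4: "4 \<le> n" and xs: "xs \<in> compositions (n-3)" and ys: "ys \<in> compositions (n-3)"
  and o: "comp_gaps ys \<in> orbS n (comp_gaps xs)"
  shows "(xs, ys) \<in> comp_equiv (n-3)"
proof -
  have m1: "1 \<le> n - 3" using n4 by simp
  have st1: "\<And>y. y \<in> compositions (n-3) \<Longrightarrow> (y, conjugate (n-3) y) \<in> comp_equiv (n-3)"
    unfolding comp_equiv_def comp_step_def by blast
  have st2: "\<And>y. y \<in> compositions (n-3) \<Longrightarrow> (y, rev y) \<in> comp_equiv (n-3)"
    unfolding comp_equiv_def comp_step_def by blast
  have tr: "trans (comp_equiv (n-3))" unfolding comp_equiv_def by (rule trans_rtrancl)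
  have gc: "\<And>y. y \<in> compositions (n-3) \<Longrightarrow> comp_gaps (conjugate (n-3) y) = Cset n (comp_gaps y)"
    using conj_props[OF _ m1] unfolding Cset_def by auto
  have gr: "\<And>y. y \<in> compositions (n-3) \<Longrightarrow> comp_gaps (rev y) = Rset n (comp_gaps y)"
    using gaps_rev unfolding Rset_def by auto
  have cc: "\<And>y. y \<in> compositions (n-3) \<Longrightarrow> conjugate (n-3) y \<in> compositions (n-3)"
    using conj_props[OF _ m1] by auto
  have inj: "\<And>a b. a \<in> compositions (n-3) \<Longrightarrow> b \<in> compositions (n-3) \<Longrightarrow> comp_gaps a = comp_gaps b \<Longrightarrow> a = b"
    using gaps_inj[OF m1] by blast
  from o consider "comp_gaps ys = comp_gaps xs" | "comp_gaps ys = Cset n (comp_gaps xs)"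
    | "comp_gaps ys = Rset n (comp_gaps xs)" | "comp_gaps ys = Cset n (Rset n (comp_gaps xs))"
    unfolding orbS_def by blast
  then show ?thesis
  proof cases
    case 1 then have "ys = xs" using inj xs ys by simp
    then show ?thesis unfolding comp_equiv_def by simp
  next
    case 2 then have "ys = conjugate (n-3) xs" using inj[OF ys cc[OF xs]] gc[OF xs] by simp
    then show ?thesis using st1[OF xs] by simp
  next
    case 3 then have "ys = rev xs" using inj[OF ys rev_comp[OF xs]] gr[OF xs] by simp
    then show ?thesis using st2[OF xs] by simp
  next
    case 4
    have rx: "rev xs \<in> compositions (n-3)" by (rule rev_comp[OF xs])
    then have "ys = conjugate (n-3) (rev xs)" using inj[OF ys cc[OF rx]] gc[OF rx] gr[OF xs] 4 by simp
    then show ?thesis using st2[OF xs] st1[OF rx] tr unfolding trans_def by blast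
  qed
qed

lemma quot_bij:
  assumes h1: "\<forall>x\<in>B. h x \<in> Q" and h2: "\<forall>q\<in>Q. \<exists>x\<in>B. h x = q"
    and h3: "\<forall>x\<in>B. \<forall>y\<in>B. h x = h y \<longleftrightarrow> s``{x} = s``{y}"
  shows "\<exists>g. bij_betw g Q (B // s)"
proof -
  define pick where "pick q = (SOME x. x \<in> B \<and> h x = q)" for q
  have pk: "\<And>q. q \<in> Q \<Longrightarrow> pick q \<in> B \<and> h (pick q) = q"
    unfolding pick_def by (rule someI_ex) (use h2 in blast)
  define g where "g q = s``{pick q}" for q
  have "bij_betw g Q (B // s)"
  proof (rule bij_betw_imageI)
    show "inj_on g Q"
    proof
      fix q1 q2 assume q: "q1 \<in> Q" "q2 \<in> Q" "g q1 = g q2"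
      then have "h (pick q1) = h (pick q2)" using h3 pk unfolding g_def by blast
      then show "q1 = q2" using pk q by simp
    qed
    show "g ` Q = B // s"
    proof (intro equalityI subsetI)
      fix c assume "c \<in> g ` Q"
      then obtain q where "q \<in> Q" "c = s``{pick q}" unfolding g_def by blast
      then show "c \<in> B // s" using pk by (blast intro: quotientI)
    next
      fix c assume "c \<in> B // s"
      then obtain x where x: "x \<in> B" "c = s``{x}" by (auto elim: quotientE)
      have q: "h x \<in> Q" using h1 x by blast
      have "s``{pick (h x)} = s``{x}" using h3 pk[OF q] x(1) by blast
      then show "c \<in> g ` Q" using q x unfolding g_def by (metis image_eqI)
    qed
  qed
  then show ?thesis by blast
qed

lemma rot_to0: assumes "u < n" shows "rot n ((n - u) mod n) u = 0"
proof (cases "u = 0")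
  case True then show ?thesis unfolding rot_def by simp
next
  case False then have "(n - u) mod n = n - u" using assms by simp
  then show ?thesis unfolding rot_def using assms by simp
qed

theorem main:
  fixes n :: nat
  assumes n4: "n \<ge> 4"
  shows "\<exists>f. bij_betw f (symmetry_classes n) (comp_classes (n - 3))"
proof -
  have n0: "0 < n" using n4 by simp
  have m1: "1 \<le> n - 3" using n4 by simp
  define h where "h xs = symmetry_rel n `` {tS n (comp_gaps xs)}" for xs
  have gs: "\<And>xs. xs \<in> compositions (n-3) \<Longrightarrow> comp_gaps xs \<subseteq> {1..<n-3}" by (rule gaps_sub)
  have "\<exists>g. bij_betw g (symmetry_classes n) (compositions (n-3) // comp_equiv (n-3))"
  proof (rule quot_bij)
    show "\<forall>x\<in>compositions (n - 3). h x \<in> symmetry_classes n"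
      unfolding h_def symmetry_classes_def using tS_two[OF n4] by (blast intro: quotientI)
    show "\<forall>q\<in>symmetry_classes n. \<exists>x\<in>compositions (n - 3). h x = q"
    proof
      fix q assume "q \<in> symmetry_classes n"
      then obtain T where T: "T \<in> two_eared_triangulations n" "q = symmetry_rel n `` {T}"
        unfolding symmetry_classes_def by (auto elim: quotientE)
      have tri: "triangulation n T" and ce: "card {t. is_ear n T t} = 2"
        using T(1) unfolding two_eared_triangulations_def by auto
      have TD: "T \<subseteq> diagonals n" by (rule tri_sub[OF tri])
      have c2: "card (shortv n T) = 2" using ce ear_count[OF n4 TD] by simp
      then obtain u where u: "u \<in> shortv n T" by (metis card.empty ex_in_conv zero_neq_numeral)
      have ul: "u < n" using u unfolding shortv_def by simp
      define k where "k = (n - u) mod n"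
      have kl: "k < n" unfolding k_def using n0 by simp
      have rd: "rot n k \<in> dihedral n" unfolding dihedral_alt using kl by auto
      let ?T' = "act (rot n k) T"
      have tri': "triangulation n ?T'" by (rule rot_tri[OF n0 kl tri])
      have sh': "shortv n ?T' = rot n k ` shortv n T" by (rule act_short[OF rd n4 TD])
      have "inj_on (rot n k) (shortv n T)"
        using dih_bij(1)[OF rd n0] by (rule inj_on_subset) (auto simp: shortv_def)
      then have c2': "card (shortv n ?T') = 2" using sh' c2 by (simp add: card_image)
      have z': "0 \<in> shortv n ?T'" using sh' u rot_to0[OF ul] unfolding k_def by force
      obtain S where S: "S \<subseteq> {1..<n-3}" "?T' = tS n S" using two_eared_canon[OF tri' n4 c2' z'] by blast
      have "symmetry_rel n `` {?T'} = symmetry_rel n `` {T}"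
        by (rule orb_act[OF n4 T(1) rd]) (use S tS_two[OF n4] in simp)
      moreover obtain xs where xs: "xs \<in> compositions (n-3)" "comp_gaps xs = S" using gaps_surj[OF m1 S(1)] by blast
      ultimately have "h xs = q" unfolding h_def using S(2) T(2) by simp
      then show "\<exists>x\<in>compositions (n - 3). h x = q" using xs(1) by blast
    qed
    show "\<forall>x\<in>compositions (n - 3). \<forall>y\<in>compositions (n - 3). h x = h y \<longleftrightarrow> comp_equiv (n-3) `` {x} = comp_equiv (n-3) `` {y}"
    proof (intro ballI)
      fix x y assume x: "x \<in> compositions (n - 3)" and y: "y \<in> compositions (n - 3)"
      have "h x = h y \<longleftrightarrow> comp_gaps y \<in> orbS n (comp_gaps x)"
        unfolding h_def by (rule orbit_iff[OF n4 gs[OF x] gs[OF y]])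
      also have "\<dots> \<longleftrightarrow> (x, y) \<in> comp_equiv (n-3)"
        using ce_inv[OF n4 _ x] ce_of[OF n4 x y] by blast
      also have "\<dots> \<longleftrightarrow> comp_equiv (n-3) `` {x} = comp_equiv (n-3) `` {y}" by (rule ce_class_iff[symmetric])
      finally show "h x = h y \<longleftrightarrow> comp_equiv (n-3) `` {x} = comp_equiv (n-3) `` {y}" .
    qed
  qed
  then show ?thesis unfolding comp_classes_def .
qed

theorem proposition2p1:
  fixes n :: nat
  assumes "n \<ge> 4"
  shows "\<exists>f. bij_betw f (symmetry_classes n) (comp_classes (n - 3))"
  using main[OF assms] .

end
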